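(* Let $A$ be the generator of a $C_0$-semigroup $e^{tA}$ on a Hilbert space $H$, $T>0$, $K\in L^2(0,T;\mathbb R)$, $\mu(t)=\int_0^te^{(t-s)A}K(s)\,ds$, $R$ the unique solution of $R(t)-\int_0^t\mu(t-s)R(s)\,ds=-\mu(t)$, and for $0\le\sigma\le\tau\le t\le T$ let $F(t,\tau)=e^{(t-\tau)A}-\int_\tau^tR(t-s)e^{(s-\tau)A}ds$, $G(t,\sigma,\tau)=\mu(t-\sigma)-e^{(t-\tau)A}\mu(\tau-\sigma)$, $M(t,\sigma,\tau)=G(t,\sigma,\tau)-\int_\tau^tR(t-s)G(s,\sigma,\tau)\,ds$. If $x\in\mathcal D(A)$, then $\partial_\tau M(t,\sigma,\tau)x$ exists and $\partial_\tau M(t,\sigma,\tau)x=-F(t,\tau)K(\tau-\sigma)x$.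
   Formalization: The derivative $\partial_\tau M(t,\sigma,\tau)x$ exists and equals $-F(t,\tau)K(\tau-\sigma)x$ only for almost every $\tau$ with $\sigma\le\tau\le t$, not for every such $\tau$, and is taken one-sided at the endpoints $\sigma$ and $t$. Apart from conventions, each condition added here is assumed in the paper as well or is needed for the statement above to hold. *)

theory Defs
  imports "HOL-Analysis.Analysis"
begin

definition C0_semigroup :: "(real \<Rightarrow> 'a::real_normed_vector \<Rightarrow>\<^sub>L 'a) \<Rightarrow> bool" where
  "C0_semigroup S \<longleftrightarrow>
     S 0 = id_blinfun \<and>
     (\<forall>s\<ge>0. \<forall>t\<ge>0. S (s + t) = S s o\<^sub>L S t) \<and>
     (\<forall>x. ((\<lambda>t. blinfun_apply (S t) x) \<longlongrightarrow> x) (at_right 0))"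

definition generator_domain :: "(real \<Rightarrow> 'a::real_normed_vector \<Rightarrow>\<^sub>L 'a) \<Rightarrow> 'a set" where
  "generator_domain S =
     {x. \<exists>y. ((\<lambda>h. (1 / h) *\<^sub>R (blinfun_apply (S h) x - x)) \<longlongrightarrow> y) (at_right 0)}"

definition generator :: "(real \<Rightarrow> 'a::real_normed_vector \<Rightarrow>\<^sub>L 'a) \<Rightarrow> 'a \<Rightarrow> 'a" where
  "generator S x = Lim (at_right 0) (\<lambda>h. (1 / h) *\<^sub>R (blinfun_apply (S h) x - x))"

definition mu_op :: "(real \<Rightarrow> 'a::real_normed_vector \<Rightarrow>\<^sub>L 'a) \<Rightarrow> (real \<Rightarrow> real) \<Rightarrow> real \<Rightarrow> 'a \<Rightarrow> 'a" where
  "mu_op S K t x = integral {0..t} (\<lambda>s. K s *\<^sub>R blinfun_apply (S (t - s)) x)"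

definition resolvent_eq ::
  "(real \<Rightarrow> 'a::real_normed_vector \<Rightarrow>\<^sub>L 'a) \<Rightarrow> (real \<Rightarrow> real) \<Rightarrow> real \<Rightarrow> (real \<Rightarrow> 'a \<Rightarrow>\<^sub>L 'a) \<Rightarrow> bool" where
  "resolvent_eq S K T R \<longleftrightarrow>
     (\<forall>t\<in>{0..T}. \<forall>x. blinfun_apply (R t) x
         - integral {0..t} (\<lambda>s. mu_op S K (t - s) (blinfun_apply (R s) x))
       = - mu_op S K t x)"

definition strongly_continuous_on :: "real set \<Rightarrow> (real \<Rightarrow> 'a::real_normed_vector \<Rightarrow>\<^sub>L 'a) \<Rightarrow> bool" where
  "strongly_continuous_on I R \<longleftrightarrow> (\<forall>x. continuous_on I (\<lambda>t. blinfun_apply (R t) x))"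

definition F_op :: "(real \<Rightarrow> 'a::real_normed_vector \<Rightarrow>\<^sub>L 'a) \<Rightarrow> (real \<Rightarrow> 'a \<Rightarrow>\<^sub>L 'a) \<Rightarrow> real \<Rightarrow> real \<Rightarrow> 'a \<Rightarrow> 'a" where
  "F_op S R t \<tau> x = blinfun_apply (S (t - \<tau>)) x
      - integral {\<tau>..t} (\<lambda>s. blinfun_apply (R (t - s)) (blinfun_apply (S (s - \<tau>)) x))"

definition G_op :: "(real \<Rightarrow> 'a::real_normed_vector \<Rightarrow>\<^sub>L 'a) \<Rightarrow> (real \<Rightarrow> real) \<Rightarrow> real \<Rightarrow> real \<Rightarrow> real \<Rightarrow> 'a \<Rightarrow> 'a" where
  "G_op S K t \<sigma> \<tau> x = mu_op S K (t - \<sigma>) x - blinfun_apply (S (t - \<tau>)) (mu_op S K (\<tau> - \<sigma>) x)"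

definition M_op :: "(real \<Rightarrow> 'a::real_normed_vector \<Rightarrow>\<^sub>L 'a) \<Rightarrow> (real \<Rightarrow> real) \<Rightarrow> (real \<Rightarrow> 'a \<Rightarrow>\<^sub>L 'a) \<Rightarrow> real \<Rightarrow> real \<Rightarrow> real \<Rightarrow> 'a \<Rightarrow> 'a" where
  "M_op S K R t \<sigma> \<tau> x = G_op S K t \<sigma> \<tau> x
      - integral {\<tau>..t} (\<lambda>s. blinfun_apply (R (t - s)) (G_op S K s \<sigma> \<tau> x))"

end

theory Submission
  imports Defs
begin

lemma baire_ball:
  fixes E :: "nat \<Rightarrow> 'a::{real_normed_vector, complete_space} set"
  assumes cl: "\<And>n. closed (E n)" and cov: "\<And>y. \<exists>n. y \<in> E n"
  shows "\<exists>n y0 e. e > 0 \<and> ball y0 e \<subseteq> E n"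
proof (rule ccontr)
  assume H: "\<not> ?thesis"
  have E0: "euclidean interior_of (E n) = {}" for n
  proof (rule ccontr)
    assume "euclidean interior_of (E n) \<noteq> {}"
    then obtain x where "x \<in> euclidean interior_of (E n)" by blast
    then obtain T where "open T" "x \<in> T" "T \<subseteq> E n"
      unfolding interior_of_def by auto
    then obtain e where "e > 0" "ball x e \<subseteq> T" using open_contains_ball by blast
    with H \<open>T \<subseteq> E n\<close> show False by blast
  qed
  have "euclidean interior_of \<Union>(range E) = {}"
  proof (rule Baire_category_alt)
    show "completely_metrizable_space (euclidean::'a topology) \<or> locally_compact_space (euclidean::'a topology) \<and> regular_space (euclidean::'a topology)"
      using completely_metrizable_space_euclidean by blast
    show "countable (range E)" by simp
    fix T assume "T \<in> range E"
    then obtain n where "T = E n" by blast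
    then show "closedin euclidean T \<and> euclidean interior_of T = {}"
      using cl[of n] E0[of n] closed_closedin by blast
  qed
  moreover have "\<Union>(range E) = UNIV" using cov by blast
  ultimately show False by (metis interior_of_topspace topspace_euclidean UNIV_not_empty)
qed

lemma ball_bound_blinfun:
  fixes L :: "'a::real_normed_vector \<Rightarrow>\<^sub>L 'b::real_normed_vector"
  assumes "e > 0" and H: "\<And>y. y \<in> ball y0 e \<Longrightarrow> norm (L y) \<le> c"
  shows "norm L \<le> 4 * c / e"
proof -
  have c0: "0 \<le> c" using H[of y0] \<open>e>0\<close> by (meson centre_in_ball norm_ge_zero order_trans)
  show ?thesis
  proof (rule norm_blinfun_bound)
    show "0 \<le> 4 * c / e" using c0 \<open>e>0\<close> by simp
    fix z
    show "norm (L z) \<le> 4 * c / e * norm z"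
    proof (cases "z = 0")
      case True then show ?thesis by simp
    next
      case False
      define y where "y = y0 + ((e/2) / norm z) *\<^sub>R z"
      have "dist y0 y = e/2" using False \<open>e>0\<close> by (simp add: y_def dist_norm)
      then have "y \<in> ball y0 e" using \<open>e>0\<close> by simp
      have d: "L y - L y0 = ((e/2) / norm z) *\<^sub>R L z"
        unfolding y_def by (simp add: blinfun.add_right blinfun.scaleR_right)
      have "(2 * norm z / e) *\<^sub>R (L y - L y0) = ((2 * norm z / e) * ((e/2) / norm z)) *\<^sub>R L z"
        unfolding d by simp
      also have "(2 * norm z / e) * ((e/2) / norm z) = 1" using False \<open>e>0\<close> by simp
      finally have "L z = (2 * norm z / e) *\<^sub>R (L y - L y0)" by simp
      then have "norm (L z) = (2 * norm z / e) * norm (L y - L y0)"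
        using \<open>e>0\<close> by simp
      also have "\<dots> \<le> (2 * norm z / e) * (c + c)"
      proof (rule mult_left_mono)
        have "norm (L y) \<le> c" by (rule H[OF \<open>y \<in> ball y0 e\<close>])
        moreover have "norm (L y0) \<le> c" using H centre_in_ball \<open>e>0\<close> by blast
        moreover have "norm (L y - L y0) \<le> norm (L y) + norm (L y0)" by (rule norm_triangle_ineq4)
        ultimately show "norm (L y - L y0) \<le> c + c" by linarith
        show "0 \<le> 2 * norm z / e" using \<open>e>0\<close> by simp
      qed
      finally show ?thesis by (simp add: field_simps)
    qed
  qed
qed

lemma ubp:
  fixes L :: "'i \<Rightarrow> 'a::{real_normed_vector,complete_space} \<Rightarrow>\<^sub>L 'b::real_normed_vector"
  assumes "\<And>y. \<exists>c. \<forall>i\<in>I. norm (L i y) \<le> c"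
  shows "\<exists>B. \<forall>i\<in>I. norm (L i) \<le> B"
proof -
  define E where "E n = {y. \<forall>i\<in>I. norm (L i y) \<le> real n}" for n
  have "closed (E n)" for n
  proof -
    have "E n = (\<Inter>i\<in>I. {y. norm (L i y) \<le> real n})" by (auto simp: E_def)
    moreover have "closed {y. norm (L i y) \<le> real n}" for i
      by (intro closed_Collect_le continuous_intros)
    ultimately show ?thesis by auto
  qed
  moreover have "\<exists>n. y \<in> E n" for y
  proof -
    obtain c where c: "\<forall>i\<in>I. norm (L i y) \<le> c" using assms by blast
    obtain n where "c \<le> real n" using real_arch_simple by blast
    have "\<forall>i\<in>I. norm (L i y) \<le> real n" using c \<open>c \<le> real n\<close> by (meson order_trans)
    then show ?thesis by (auto simp: E_def)
  qed
  ultimately obtain n y0 e where "e > 0" "ball y0 e \<subseteq> E n" using baire_ball by metis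
  have "norm (L i) \<le> 4 * real n / e" if "i \<in> I" for i
  proof (rule ball_bound_blinfun[OF \<open>e>0\<close>])
    fix y assume "y \<in> ball y0 e"
    then have "y \<in> E n" using \<open>ball y0 e \<subseteq> E n\<close> by blast
    then show "norm (L i y) \<le> real n" using that unfolding E_def by blast
  qed
  then show ?thesis by blast
qed

lemma at_right0_tendstoI:
  fixes f :: "real \<Rightarrow> 'b::metric_space"
  assumes "\<And>e. e > 0 \<Longrightarrow> \<exists>d>0. \<forall>h. 0 < h \<longrightarrow> h < d \<longrightarrow> dist (f h) L < e"
  shows "(f \<longlongrightarrow> L) (at_right 0)"
proof (rule tendstoI)
  fix e :: real assume "e > 0"
  then obtain d where "d > 0" "\<forall>h. 0 < h \<longrightarrow> h < d \<longrightarrow> dist (f h) L < e" using assms by blast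
  then show "\<forall>\<^sub>F h in at_right 0. dist (f h) L < e"
    unfolding eventually_at_right_field by (intro exI[of _ d]) auto
qed

lemma at_right0_tendstoD:
  fixes f :: "real \<Rightarrow> 'b::metric_space"
  assumes "(f \<longlongrightarrow> L) (at_right 0)" "e > 0"
  shows "\<exists>d>0. \<forall>h. 0 < h \<longrightarrow> h < d \<longrightarrow> dist (f h) L < e"
proof -
  have "\<forall>\<^sub>F h in at_right 0. dist (f h) L < e" using tendstoD[OF assms] .
  then obtain b where "b > 0" "\<forall>h>0. h < b \<longrightarrow> dist (f h) L < e"
    unfolding eventually_at_right_field by auto
  then show ?thesis by blast
qed

lemma LD_bad_negligible:
  fixes g :: "real \<Rightarrow> real" and s :: real
  assumes g: "g integrable_on {a..b}" and s: "\<bar>s\<bar> = 1"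
  shows "negligible {x. a < x \<and> x < b \<and> (\<forall>d>0. \<exists>h. 0 < h \<and> h < d \<and>
            cball (x + s*h/2) (h/2) \<subseteq> {a..b} \<and>
            h / real (Suc n) \<le> \<bar>integral (cball (x + s*h/2) (h/2)) g - h * g x\<bar>)}"
    (is "negligible ?E")
proof (unfold negligible_outer_le, intro allI impI)
  fix e :: real assume "e > 0"
  define \<eta> where "\<eta> = e / real (Suc n)"
  have "\<eta> > 0" using \<open>e>0\<close> by (simp add: \<eta>_def)
  have gc: "g integrable_on cbox a b" using g by simp
  obtain \<gamma> where "gauge \<gamma>" and
    hen: "\<And>p. \<lbrakk>p tagged_partial_division_of (cbox a b); \<gamma> fine p\<rbrakk> \<Longrightarrow>
             sum (\<lambda>(x,k). norm(measure lborel k *\<^sub>R g x - integral k g)) p < \<eta>"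
    using Henstock_lemma[OF gc \<open>\<eta>>0\<close>] by blast
  define cen where "cen i = fst i + s * snd i / 2" for i :: "real \<times> real"
  define rad where "rad i = snd i / 2" for i :: "real \<times> real"
  define KK where "KK = {i. fst i \<in> ?E \<and> 0 < snd i \<and> cball (cen i) (rad i) \<subseteq> {a..b} \<and>
      cball (cen i) (rad i) \<subseteq> \<gamma> (fst i) \<and>
      snd i / real (Suc n) \<le> \<bar>integral (cball (cen i) (rad i)) g - snd i * g (fst i)\<bar>}"
  have cb_sub: "cball (x + s*h/2) (h/2) \<subseteq> ball x \<rho>" if "0 < h" "h < \<rho>" for x h \<rho>
  proof
    fix y assume "y \<in> cball (x + s*h/2) (h/2)"
    then have "\<bar>y - (x + s*h/2)\<bar> \<le> h/2" by (simp add: dist_real_def abs_minus_commute)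
    moreover have "\<bar>s*h/2\<bar> = h/2" using s that by (simp add: abs_mult)
    ultimately have "\<bar>y - x\<bar> \<le> h" by linarith
    then show "y \<in> ball x \<rho>" using that by (simp add: dist_real_def abs_minus_commute)
  qed
  obtain C where C: "countable C" "C \<subseteq> KK"
     "pairwise (\<lambda>i j. disjnt (cball (cen i) (rad i)) (cball (cen j) (rad j))) C"
     "negligible(?E - (\<Union>i \<in> C. cball (cen i) (rad i)))"
  proof (rule Vitali_covering_theorem_cballs[of KK rad ?E cen])
    show "0 < rad i" if "i \<in> KK" for i using that by (simp add: KK_def rad_def)
    fix x and d :: real assume x: "x \<in> ?E" and "0 < d"
    have "x \<in> \<gamma> x" "open (\<gamma> x)" using \<open>gauge \<gamma>\<close> unfolding gauge_def by auto
    then obtain \<rho> where "\<rho> > 0" "ball x \<rho> \<subseteq> \<gamma> x" using open_contains_ball by blast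
    have "min \<rho> (2*d) > 0" using \<open>\<rho>>0\<close> \<open>d>0\<close> by simp
    with x obtain h where h: "0 < h" "h < min \<rho> (2*d)" "cball (x + s*h/2) (h/2) \<subseteq> {a..b}"
       "h / real (Suc n) \<le> \<bar>integral (cball (x + s*h/2) (h/2)) g - h * g x\<bar>"
      by blast
    have "cball (x + s*h/2) (h/2) \<subseteq> \<gamma> x"
      using cb_sub[of h \<rho> x] h \<open>ball x \<rho> \<subseteq> \<gamma> x\<close> by auto
    then have "(x,h) \<in> KK" using h x by (simp add: KK_def cen_def rad_def)
    moreover have "x \<in> cball (cen (x,h)) (rad (x,h))"
      using s h(1) by (simp add: cen_def rad_def dist_real_def abs_mult)
    moreover have "rad (x,h) < d" using h by (simp add: rad_def)
    ultimately show "\<exists>i. i \<in> KK \<and> x \<in> cball (cen i) (rad i) \<and> rad i < d" by blast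
  qed
  have cball_nonempty: "cball (cen i) (rad i) \<noteq> {}" if "i \<in> KK" for i
    using that by (simp add: KK_def rad_def)
  have meas_cb: "measure lebesgue (cball (cen i) (rad i)) = snd i" if "i \<in> KK" for i
    using that by (simp add: KK_def rad_def cball_eq_atLeastAtMost)
  have content_cb: "measure lborel (cball (cen i) (rad i)) = snd i" if "i \<in> KK" for i
    using that by (simp add: KK_def rad_def cball_eq_atLeastAtMost)
  have finbound: "measure lebesgue (\<Union>i\<in>F. cball (cen i) (rad i)) \<le> e" if "F \<subseteq> C" "finite F" for F
  proof -
    define p where "p = (\<lambda>i. (fst i, cball (cen i) (rad i))) ` F"
    have inj: "inj_on (\<lambda>i. (fst i, cball (cen i) (rad i))) F"
    proof (rule inj_onI)
      fix i j assume ij: "i \<in> F" "j \<in> F" "(fst i, cball (cen i) (rad i)) = (fst j, cball (cen j) (rad j))"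
      show "i = j"
      proof (rule ccontr)
        assume "i \<noteq> j"
        then have "disjnt (cball (cen i) (rad i)) (cball (cen j) (rad j))"
          using C(3) ij that unfolding pairwise_def by blast
        moreover have "cball (cen i) (rad i) \<noteq> {}" using cball_nonempty ij that C(2) by blast
        ultimately show False using ij(3) by (simp add: disjnt_def)
      qed
    qed
    have ptag: "p tagged_partial_division_of (cbox a b)"
      unfolding tagged_partial_division_of_def
    proof (intro conjI allI impI)
      show "finite p" using that by (simp add: p_def)
      fix x K assume "(x, K) \<in> p"
      then obtain i where i: "i \<in> F" "x = fst i" "K = cball (cen i) (rad i)" by (auto simp: p_def)
      then have iK: "i \<in> KK" using that C(2) by blast
      show "x \<in> K" using i iK s by (simp add: KK_def cen_def rad_def dist_real_def abs_mult)
      show "K \<subseteq> cbox a b" using i iK by (simp add: KK_def)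
      show "\<exists>a b. K = cbox a b" using i by (metis cball_eq_atLeastAtMost box_real(2))
    next
      fix x1 K1 x2 K2 assume as: "(x1, K1) \<in> p \<and> (x2, K2) \<in> p \<and> (x1, K1) \<noteq> (x2, K2)"
      then obtain i j where "i \<in> F" "j \<in> F" "K1 = cball (cen i) (rad i)" "K2 = cball (cen j) (rad j)" "i \<noteq> j"
        by (auto simp: p_def)
      then have "disjnt K1 K2" using C(3) that unfolding pairwise_def by blast
      then show "interior K1 \<inter> interior K2 = {}"
        using interior_subset by (auto simp: disjnt_def)
    qed
    have pfine: "\<gamma> fine p"
      unfolding fine_def p_def using that C(2) by (auto simp: KK_def)
    have "(\<Sum>i\<in>F. snd i / real (Suc n)) \<le> (\<Sum>i\<in>F. \<bar>integral (cball (cen i) (rad i)) g - snd i * g (fst i)\<bar>)"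
      by (intro sum_mono) (use that C(2) in \<open>auto simp: KK_def\<close>)
    also have "\<dots> = (\<Sum>i\<in>F. norm (measure lborel (cball (cen i) (rad i)) *\<^sub>R g (fst i) - integral (cball (cen i) (rad i)) g))"
    proof (intro sum.cong refl)
      fix i assume "i \<in> F"
      then have "i \<in> KK" using that C(2) by blast
      then show "\<bar>integral (cball (cen i) (rad i)) g - snd i * g (fst i)\<bar> = norm (measure lborel (cball (cen i) (rad i)) *\<^sub>R g (fst i) - integral (cball (cen i) (rad i)) g)"
        using content_cb by (simp add: abs_minus_commute)
    qed
    also have "\<dots> = sum (\<lambda>(x,k). norm(measure lborel k *\<^sub>R g x - integral k g)) p"
      unfolding p_def by (subst sum.reindex[OF inj]) (simp add: case_prod_unfold)
    also have "\<dots> < \<eta>" by (rule hen[OF ptag pfine])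
    finally have "(\<Sum>i\<in>F. snd i) / real (Suc n) < \<eta>" by (simp add: sum_divide_distrib)
    then have "(\<Sum>i\<in>F. snd i) < e" unfolding \<eta>_def by (simp add: divide_less_cancel)
    then have sumF: "(\<Sum>i\<in>F. snd i) \<le> e" by simp
    have "measure lebesgue (\<Union>i\<in>F. cball (cen i) (rad i)) \<le> (\<Sum>i\<in>F. measure lebesgue (cball (cen i) (rad i)))"
      by (rule measure_UNION_le) (use that in auto)
    also have "\<dots> = (\<Sum>i\<in>F. snd i)"
      by (intro sum.cong refl) (use that C(2) meas_cb in blast)
    finally show ?thesis using sumF by linarith
  qed
  have U: "(\<Union>i\<in>C. cball (cen i) (rad i)) \<in> lmeasurable"
    by (rule fmeasurable_UN_bound[OF C(1) _ finbound]) auto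
  have Um: "measure lebesgue (\<Union>i\<in>C. cball (cen i) (rad i)) \<le> e"
    by (rule measure_UN_bound[OF C(1) _ finbound]) auto
  define N where "N = ?E - (\<Union>i \<in> C. cball (cen i) (rad i))"
  have Nn: "N \<in> null_sets lebesgue" using C(4) by (simp add: N_def negligible_iff_null_sets)
  show "\<exists>T. ?E \<subseteq> T \<and> T \<in> lmeasurable \<and> measure lebesgue T \<le> e"
  proof (intro exI conjI)
    show "?E \<subseteq> (\<Union>i\<in>C. cball (cen i) (rad i)) \<union> N" by (auto simp: N_def)
    show "(\<Union>i\<in>C. cball (cen i) (rad i)) \<union> N \<in> lmeasurable"
      using U fmeasurableI_null_sets[OF Nn] by (rule fmeasurable.Un)
    show "measure lebesgue ((\<Union>i\<in>C. cball (cen i) (rad i)) \<union> N) \<le> e"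
      using Um U Nn by (subst measure_Un_null_set) auto
  qed
qed


lemma LD_side:
  fixes g :: "real \<Rightarrow> real" and s :: real
  assumes g: "g integrable_on {a..b}" and s: "\<bar>s\<bar> = 1"
  shows "\<exists>N. negligible N \<and> (\<forall>x. a < x \<longrightarrow> x < b \<longrightarrow> x \<notin> N \<longrightarrow>
     (\<forall>e>0. \<exists>d>0. \<forall>h. 0 < h \<longrightarrow> h < d \<longrightarrow>
        \<bar>integral (cball (x + s*h/2) (h/2)) g / h - g x\<bar> < e))"
proof -
  define E where "E n = {x. a < x \<and> x < b \<and> (\<forall>d>0. \<exists>h. 0 < h \<and> h < d \<and>
            cball (x + s*h/2) (h/2) \<subseteq> {a..b} \<and>
            h / real (Suc n) \<le> \<bar>integral (cball (x + s*h/2) (h/2)) g - h * g x\<bar>)}" for n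
  have "negligible (E n)" for n unfolding E_def by (rule LD_bad_negligible[OF g s])
  then have neg: "negligible (\<Union>n. E n)" by (rule negligible_Union_nat)
  have cb_sub: "cball (x + s*h/2) (h/2) \<subseteq> {x - h .. x + h}" if "0 < h" for x h
  proof
    fix y assume "y \<in> cball (x + s*h/2) (h/2)"
    then have "\<bar>y - (x + s*h/2)\<bar> \<le> h/2" by (simp add: dist_real_def abs_minus_commute)
    moreover have "\<bar>s*h/2\<bar> = h/2" using s that by (simp add: abs_mult)
    ultimately have "\<bar>y - x\<bar> \<le> h" by linarith
    then show "y \<in> {x - h .. x + h}" by (simp add: abs_le_iff)
  qed
  show ?thesis
  proof (rule exI[where x="\<Union>n. E n"], intro conjI allI impI)
    show "negligible (\<Union>n. E n)" by (rule neg)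
    fix x e :: real assume x: "a < x" "x < b" "x \<notin> (\<Union>n. E n)" and "e > 0"
    obtain n where n: "inverse (real (Suc n)) < e" using reals_Archimedean[OF \<open>e>0\<close>] by blast
    have "x \<notin> E n" using x by blast
    then obtain d where "d > 0" and d: "\<And>h. 0 < h \<Longrightarrow> h < d \<Longrightarrow> cball (x + s*h/2) (h/2) \<subseteq> {a..b} \<Longrightarrow>
        \<bar>integral (cball (x + s*h/2) (h/2)) g - h * g x\<bar> < h / real (Suc n)"
      using \<open>x \<notin> E n\<close> x(1,2) unfolding E_def by (force simp: not_le)
    show "\<exists>d>0. \<forall>h. 0 < h \<longrightarrow> h < d \<longrightarrow> \<bar>integral (cball (x + s*h/2) (h/2)) g / h - g x\<bar> < e"
    proof (intro exI conjI allI impI)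
      show "min d (min (x - a) (b - x)) > 0" using \<open>d>0\<close> x by simp
      fix h assume h: "0 < h" "h < min d (min (x - a) (b - x))"
      have "cball (x + s*h/2) (h/2) \<subseteq> {a..b}"
        using cb_sub[OF h(1), of x] h by auto
      then have 1: "\<bar>integral (cball (x + s*h/2) (h/2)) g - h * g x\<bar> < h / real (Suc n)"
        using d h by simp
      have "integral (cball (x + s*h/2) (h/2)) g / h - g x = (integral (cball (x + s*h/2) (h/2)) g - h * g x) / h"
        using h by (simp add: field_simps)
      then have "\<bar>integral (cball (x + s*h/2) (h/2)) g / h - g x\<bar> = \<bar>integral (cball (x + s*h/2) (h/2)) g - h * g x\<bar> / h"
        using h by simp
      also have "\<dots> < (h / real (Suc n)) / h" by (rule divide_strict_right_mono[OF 1 h(1)])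
      also have "\<dots> = inverse (real (Suc n))" using h by (simp add: divide_inverse)
      finally show "\<bar>integral (cball (x + s*h/2) (h/2)) g / h - g x\<bar> < e" using n by linarith
    qed
  qed
qed

lemma LD:
  fixes g :: "real \<Rightarrow> real"
  assumes g: "g integrable_on {a..b}"
  shows "\<exists>N. negligible N \<and> (\<forall>x. a < x \<longrightarrow> x < b \<longrightarrow> x \<notin> N \<longrightarrow>
     (\<forall>e>0. \<exists>d>0. \<forall>h. 0 < h \<longrightarrow> h < d \<longrightarrow>
        \<bar>integral {x..x+h} g / h - g x\<bar> < e \<and> \<bar>integral {x-h..x} g / h - g x\<bar> < e))"
proof -
  obtain N1 where N1: "negligible N1" "\<forall>x. a < x \<longrightarrow> x < b \<longrightarrow> x \<notin> N1 \<longrightarrow>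
     (\<forall>e>0. \<exists>d>0. \<forall>h. 0 < h \<longrightarrow> h < d \<longrightarrow>
        \<bar>integral (cball (x + 1*h/2) (h/2)) g / h - g x\<bar> < e)"
    using LD_side[OF g, of 1] by auto
  obtain N2 where N2: "negligible N2" "\<forall>x. a < x \<longrightarrow> x < b \<longrightarrow> x \<notin> N2 \<longrightarrow>
     (\<forall>e>0. \<exists>d>0. \<forall>h. 0 < h \<longrightarrow> h < d \<longrightarrow>
        \<bar>integral (cball (x + (-1)*h/2) (h/2)) g / h - g x\<bar> < e)"
    using LD_side[OF g, of "-1"] by auto
  have c1: "cball (x + 1*h/2) (h/2) = {x..x+h}" for x h :: real
    by (simp add: cball_eq_atLeastAtMost)
  have c2: "cball (x + (-1)*h/2) (h/2) = {x-h..x}" for x h :: real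
    by (simp add: cball_eq_atLeastAtMost)
  show ?thesis
  proof (rule exI[where x="N1 \<union> N2"], intro conjI allI impI)
    show "negligible (N1 \<union> N2)" using N1 N2 by simp
    fix x e :: real assume x: "a < x" "x < b" "x \<notin> N1 \<union> N2" "e > 0"
    obtain d1 where "d1 > 0" "\<forall>h. 0 < h \<longrightarrow> h < d1 \<longrightarrow> \<bar>integral {x..x+h} g / h - g x\<bar> < e"
      using N1(2) x unfolding c1 by blast
    moreover obtain d2 where "d2 > 0" "\<forall>h. 0 < h \<longrightarrow> h < d2 \<longrightarrow> \<bar>integral {x-h..x} g / h - g x\<bar> < e"
      using N2(2) x unfolding c2 by blast
    ultimately show "\<exists>d>0. \<forall>h. 0 < h \<longrightarrow> h < d \<longrightarrow>
        \<bar>integral {x..x+h} g / h - g x\<bar> < e \<and> \<bar>integral {x-h..x} g / h - g x\<bar> < e"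
      by (intro exI[of _ "min d1 d2"]) auto
  qed
qed

lemma operative_wapproximableI:
  fixes f :: "'b::euclidean_space \<Rightarrow> 'a::{real_normed_vector,complete_space}" and w :: "'b \<Rightarrow> real"
  assumes "0 \<le> e" and w: "\<And>x. 0 \<le> w x"
  shows "operative conj True (\<lambda>i. \<exists>g. (\<forall>x\<in>i. norm (f x - g (x::'b)) \<le> e * w x) \<and> g integrable_on i)"
proof -
  interpret comm_monoid conj True
    by standard auto
  show ?thesis
  proof (standard, safe)
    fix a b :: 'b
    show "\<exists>g. (\<forall>x\<in>cbox a b. norm (f x - g x) \<le> e * w x) \<and> g integrable_on cbox a b"
      if "box a b = {}" for a b
      using assms that
      by (metis content_eq_0_interior integrable_on_null interior_cbox norm_zero right_minus_eq mult_nonneg_nonneg)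
    {
      fix c g and k :: 'b
      assume fg: "\<forall>x\<in>cbox a b. norm (f x - g x) \<le> e * w x" and g: "g integrable_on cbox a b"
      assume k: "k \<in> Basis"
      show "\<exists>g. (\<forall>x\<in>cbox a b \<inter> {x. x \<bullet> k \<le> c}. norm (f x - g x) \<le> e * w x) \<and> g integrable_on cbox a b \<inter> {x. x \<bullet> k \<le> c}"
           "\<exists>g. (\<forall>x\<in>cbox a b \<inter> {x. c \<le> x \<bullet> k}. norm (f x - g x) \<le> e * w x) \<and> g integrable_on cbox a b \<inter> {x. c \<le> x \<bullet> k}"
        using fg g k by auto
    }
    show "\<exists>g. (\<forall>x\<in>cbox a b. norm (f x - g x) \<le> e * w x) \<and> g integrable_on cbox a b"
      if fg1: "\<forall>x\<in>cbox a b \<inter> {x. x \<bullet> k \<le> c}. norm (f x - g1 x) \<le> e * w x" 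
        and g1: "g1 integrable_on cbox a b \<inter> {x. x \<bullet> k \<le> c}"
        and fg2: "\<forall>x\<in>cbox a b \<inter> {x. c \<le> x \<bullet> k}. norm (f x - g2 x) \<le> e * w x" 
        and g2: "g2 integrable_on cbox a b \<inter> {x. c \<le> x \<bullet> k}" 
        and k: "k \<in> Basis"
      for c k g1 g2
    proof -
      let ?g = "\<lambda>x. if x\<bullet>k = c then f x else if x\<bullet>k \<le> c then g1 x else g2 x"
      show "\<exists>g. (\<forall>x\<in>cbox a b. norm (f x - g x) \<le> e * w x) \<and> g integrable_on cbox a b"
      proof (intro exI conjI ballI)
        show "norm (f x - ?g x) \<le> e * w x" if "x \<in> cbox a b" for x
          using assms by (auto simp: that fg1 fg2)
        show "?g integrable_on cbox a b"
        proof -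
          have "?g integrable_on cbox a b \<inter> {x. x \<bullet> k \<le> c}" "?g integrable_on cbox a b \<inter> {x. x \<bullet> k \<ge> c}"
            by(rule integrable_spike[OF _ negligible_standard_hyperplane[of k c]], use k g1 g2 in auto)+
          with has_integral_split[OF _ _ k] show ?thesis
            unfolding integrable_on_def by blast
        qed
      qed
    qed
  qed
qed

lemma wapproximable_on_division:
  fixes f :: "'b::euclidean_space \<Rightarrow> 'a::{real_normed_vector,complete_space}"
  assumes "0 \<le> e" and w: "\<And>x. 0 \<le> w x"
    and d: "d division_of (cbox a b)"
    and f: "\<forall>i\<in>d. \<exists>g. (\<forall>x\<in>i. norm (f x - g x) \<le> e * w x) \<and> g integrable_on i"
  obtains g where "\<forall>x\<in>cbox a b. norm (f x - g x) \<le> e * w x" "g integrable_on cbox a b"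
proof -
  interpret operative conj True "\<lambda>i. \<exists>g. (\<forall>x\<in>i. norm (f x - g (x::'b)) \<le> e * w x) \<and> g integrable_on i"
    using \<open>0 \<le> e\<close> w by (rule operative_wapproximableI)
  from f local.division [OF d] that show thesis
    by auto
qed

lemma weighted_approx:
  fixes f :: "real \<Rightarrow> 'a::{real_normed_vector,complete_space}" and K :: "real \<Rightarrow> real"
  assumes K: "K integrable_on {a..b}" and f: "continuous_on {a..b} f" and "e > 0"
  obtains g where "\<forall>x\<in>{a..b}. norm (K x *\<^sub>R f x - g x) \<le> e * \<bar>K x\<bar>" "g integrable_on {a..b}"
proof -
  obtain d where "0 < d" and d: "\<And>x x'. \<lbrakk>x \<in> {a..b}; x' \<in> {a..b}; dist x' x < d\<rbrakk> \<Longrightarrow> dist (f x') (f x) < e"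
    using compact_uniformly_continuous[OF f compact_Icc] \<open>e>0\<close> unfolding uniformly_continuous_on_def by metis
  obtain p where ptag: "p tagged_division_of cbox a b" and finep: "(\<lambda>x. ball x d) fine p"
    using fine_division_exists[OF gauge_ball[OF \<open>0 < d\<close>], of a b] .
  have *: "\<forall>i\<in>snd ` p. \<exists>g. (\<forall>x\<in>i. norm (K x *\<^sub>R f x - g x) \<le> e * \<bar>K x\<bar>) \<and> g integrable_on i"
  proof clarsimp 
    fix x l
    assume as: "(x, l) \<in> p"
    obtain u v where l: "l = cbox u v"
      using as ptag by blast
    have lsub: "l \<subseteq> {a..b}" using as ptag by (force simp: tagged_division_of)
    have x: "x \<in> l" using as ptag by (force simp: tagged_division_of)
    show "\<exists>g. (\<forall>y\<in>l. norm (K y *\<^sub>R f y - g y) \<le> e * \<bar>K y\<bar>) \<and> g integrable_on l"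
    proof (intro exI conjI strip)
      have "K integrable_on cbox u v" using integrable_on_subcbox[OF K] lsub l by blast
      then show "(\<lambda>y. K y *\<^sub>R f x) integrable_on l"
        unfolding l by (rule integrable_on_scaleR_left)
    next
      fix y
      assume y: "y \<in> l"
      then have "y \<in> ball x d"
        using as finep by (force simp: fine_def)
      then have "dist (f y) (f x) < e"
        using d x y lsub by (metis dist_commute mem_ball subsetD)
      then have "norm (f y - f x) \<le> e" by (simp add: dist_norm)
      then have "\<bar>K y\<bar> * norm (f y - f x) \<le> \<bar>K y\<bar> * e" by (simp add: mult_left_mono)
      moreover have "K y *\<^sub>R f y - K y *\<^sub>R f x = K y *\<^sub>R (f y - f x)" by (simp add: scaleR_diff_right)
      ultimately show "norm (K y *\<^sub>R f y - K y *\<^sub>R f x) \<le> e * \<bar>K y\<bar>" by (simp add: mult.commute)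
    qed
  qed
  have "0 \<le> e" using \<open>e>0\<close> by simp
  from wapproximable_on_division[OF this abs_ge_zero division_of_tagged_division[OF ptag] *]
  show thesis using that by (metis box_real(2))
qed


lemma riemann_weighted_bound:
  fixes F G :: "real \<Rightarrow> 'a::real_normed_vector" and w :: "real \<Rightarrow> real"
  assumes D: "D tagged_division_of cbox a b"
    and le: "\<And>x. x \<in> cbox a b \<Longrightarrow> norm (F x - G x) \<le> c * w x" and "0 \<le> c"
  shows "norm ((\<Sum>(x,k)\<in>D. measure lborel k *\<^sub>R F x) - (\<Sum>(x,k)\<in>D. measure lborel k *\<^sub>R G x))
         \<le> c * (\<Sum>(x,k)\<in>D. measure lborel k *\<^sub>R w x)"
proof -
  have "(\<Sum>(x,k)\<in>D. measure lborel k *\<^sub>R F x) - (\<Sum>(x,k)\<in>D. measure lborel k *\<^sub>R G x)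
      = (\<Sum>(x,k)\<in>D. measure lborel k *\<^sub>R (F x - G x))"
    by (simp add: sum_subtractf[symmetric] case_prod_unfold scaleR_diff_right)
  then have "norm ((\<Sum>(x,k)\<in>D. measure lborel k *\<^sub>R F x) - (\<Sum>(x,k)\<in>D. measure lborel k *\<^sub>R G x))
      \<le> (\<Sum>(x,k)\<in>D. norm (measure lborel k *\<^sub>R (F x - G x)))"
    using norm_sum[of "\<lambda>(x,k). measure lborel k *\<^sub>R (F x - G x)" D] by (simp add: case_prod_unfold)
  also have "\<dots> \<le> (\<Sum>(x,k)\<in>D. c * (measure lborel k *\<^sub>R w x))"
  proof (rule sum_mono)
    fix xk assume "xk \<in> D"
    obtain x k where xk: "xk = (x,k)" by force
    have "x \<in> cbox a b" using D \<open>xk \<in> D\<close> xk by (force simp: tagged_division_of)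
    show "(case xk of (x,k) \<Rightarrow> norm (measure lborel k *\<^sub>R (F x - G x))) \<le> (case xk of (x,k) \<Rightarrow> c * (measure lborel k *\<^sub>R w x))"
    proof -
      have "measure lborel k * norm (F x - G x) \<le> measure lborel k * (c * w x)"
        by (rule mult_left_mono[OF le[OF \<open>x \<in> cbox a b\<close>] measure_nonneg])
      then show ?thesis by (simp add: xk mult.left_commute norm_scaleR)
    qed
  qed
  also have "\<dots> = c * (\<Sum>(x,k)\<in>D. measure lborel k *\<^sub>R w x)"
    by (simp add: sum_distrib_left case_prod_unfold)
  finally show ?thesis .
qed

lemma integrable_weighted:
  fixes f :: "real \<Rightarrow> 'a::{real_normed_vector,complete_space}" and K :: "real \<Rightarrow> real"
  assumes K: "K integrable_on {a..b}" and Ka: "(\<lambda>x. \<bar>K x\<bar>) integrable_on {a..b}"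
    and f: "continuous_on {a..b} f"
  shows "(\<lambda>x. K x *\<^sub>R f x) integrable_on {a..b}"
proof -
  have "(\<lambda>x. K x *\<^sub>R f x) integrable_on cbox a b"
  proof (subst integrable_Cauchy, intro allI impI)
    fix e :: real assume "e > 0"
    define W where "W = integral {a..b} (\<lambda>x. \<bar>K x\<bar>)"
    have W0: "W \<ge> 0" unfolding W_def by (rule integral_nonneg[OF Ka]) simp
    define e1 where "e1 = e / (4 * (W + 1))"
    have e1: "e1 > 0" using \<open>e>0\<close> W0 by (simp add: e1_def)
    obtain g where g1: "\<forall>x\<in>{a..b}. norm (K x *\<^sub>R f x - g x) \<le> e1 * \<bar>K x\<bar>" and g2: "g integrable_on {a..b}"
      using weighted_approx[OF K f e1] by blast
    have "g integrable_on cbox a b" using g2 by simp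
    then obtain \<gamma>1 where "gauge \<gamma>1" and \<gamma>1: "\<And>D1 D2. D1 tagged_division_of (cbox a b) \<and> \<gamma>1 fine D1 \<and>
            D2 tagged_division_of (cbox a b) \<and> \<gamma>1 fine D2 \<Longrightarrow>
            norm ((\<Sum>(x,K)\<in>D1. measure lborel K *\<^sub>R g x) - (\<Sum>(x,K)\<in>D2. measure lborel K *\<^sub>R g x)) < e/2"
      using \<open>e>0\<close> unfolding integrable_Cauchy by (meson half_gt_zero)
    have "((\<lambda>x. \<bar>K x\<bar>) has_integral W) (cbox a b)" using integrable_integral[OF Ka] unfolding W_def by simp
    then obtain \<gamma>0 where "gauge \<gamma>0" and \<gamma>0: "\<And>D. D tagged_division_of (cbox a b) \<and> \<gamma>0 fine D \<Longrightarrow>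
        norm ((\<Sum>(x, k)\<in>D. measure lborel k *\<^sub>R \<bar>K x\<bar>) - W) < 1"
      unfolding has_integral by (meson zero_less_one)
    have bnd: "norm ((\<Sum>(x,k)\<in>D. measure lborel k *\<^sub>R (K x *\<^sub>R f x)) - (\<Sum>(x,k)\<in>D. measure lborel k *\<^sub>R g x)) \<le> e/4"
      if D: "D tagged_division_of (cbox a b)" "\<gamma>0 fine D" for D
    proof -
      have "norm ((\<Sum>(x,k)\<in>D. measure lborel k *\<^sub>R (K x *\<^sub>R f x)) - (\<Sum>(x,k)\<in>D. measure lborel k *\<^sub>R g x))
           \<le> e1 * (\<Sum>(x,k)\<in>D. measure lborel k *\<^sub>R \<bar>K x\<bar>)"
        by (rule riemann_weighted_bound[OF D(1)]) (use g1 e1 in auto)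
      also have "\<dots> \<le> e1 * (W + 1)"
      proof (rule mult_left_mono)
        have "norm ((\<Sum>(x, k)\<in>D. measure lborel k *\<^sub>R \<bar>K x\<bar>) - W) < 1" using \<gamma>0 D by blast
        then show "(\<Sum>(x, k)\<in>D. measure lborel k *\<^sub>R \<bar>K x\<bar>) \<le> W + 1" by simp
      qed (use e1 in simp)
      also have "\<dots> = e/4" using W0 unfolding e1_def by (simp add: divide_simps)
      finally show ?thesis .
    qed
    show "\<exists>\<gamma>. gauge \<gamma> \<and> (\<forall>D1 D2. D1 tagged_division_of cbox a b \<and> \<gamma> fine D1 \<and>
            D2 tagged_division_of cbox a b \<and> \<gamma> fine D2 \<longrightarrow>
            norm ((\<Sum>(x,k)\<in>D1. measure lborel k *\<^sub>R (K x *\<^sub>R f x)) - (\<Sum>(x,k)\<in>D2. measure lborel k *\<^sub>R (K x *\<^sub>R f x))) < e)"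
    proof (intro exI conjI allI impI)
      show "gauge (\<lambda>x. \<gamma>0 x \<inter> \<gamma>1 x)" using \<open>gauge \<gamma>0\<close> \<open>gauge \<gamma>1\<close> by (rule gauge_Int)
      fix D1 D2
      assume as: "D1 tagged_division_of cbox a b \<and> (\<lambda>x. \<gamma>0 x \<inter> \<gamma>1 x) fine D1 \<and>
            D2 tagged_division_of cbox a b \<and> (\<lambda>x. \<gamma>0 x \<inter> \<gamma>1 x) fine D2"
      then have f0: "\<gamma>0 fine D1" "\<gamma>0 fine D2" and f1: "\<gamma>1 fine D1" "\<gamma>1 fine D2"
        by (auto simp: fine_Int)
      let ?S1 = "(\<Sum>(x,k)\<in>D1. measure lborel k *\<^sub>R (K x *\<^sub>R f x))"
      let ?S2 = "(\<Sum>(x,k)\<in>D2. measure lborel k *\<^sub>R (K x *\<^sub>R f x))"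
      let ?T1 = "(\<Sum>(x,k)\<in>D1. measure lborel k *\<^sub>R g x)"
      let ?T2 = "(\<Sum>(x,k)\<in>D2. measure lborel k *\<^sub>R g x)"
      have "norm (?S1 - ?T1) \<le> e/4" using bnd as f0 by blast
      moreover have "norm (?S2 - ?T2) \<le> e/4" using bnd as f0 by blast
      moreover have "norm (?T1 - ?T2) < e/2" using \<gamma>1 as f1 by blast
      moreover have "norm (?S1 - ?S2) \<le> norm (?S1 - ?T1) + norm (?T1 - ?T2) + norm (?S2 - ?T2)"
      proof -
        have eq: "?S1 - ?S2 = ((?S1 - ?T1) + (?T1 - ?T2)) - (?S2 - ?T2)" by (simp add: algebra_simps)
        have "norm (((?S1 - ?T1) + (?T1 - ?T2)) - (?S2 - ?T2)) \<le> norm ((?S1 - ?T1) + (?T1 - ?T2)) + norm (?S2 - ?T2)"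
          by (rule norm_triangle_ineq4)
        moreover have "norm ((?S1 - ?T1) + (?T1 - ?T2)) \<le> norm (?S1 - ?T1) + norm (?T1 - ?T2)"
          by (rule norm_triangle_ineq)
        ultimately show ?thesis unfolding eq by linarith
      qed
      ultimately show "norm (?S1 - ?S2) < e" by linarith
    qed
  qed
  then show ?thesis by simp
qed

lemma integrable_continuous_H:
  fixes f :: "real \<Rightarrow> 'a::{real_normed_vector,complete_space}"
  assumes f: "continuous_on {a..b} f"
  shows "f integrable_on {a..b}"
proof -
  have "(\<lambda>x. (1::real) *\<^sub>R f x) integrable_on {a..b}"
    by (rule integrable_weighted) (auto intro: f)
  then show ?thesis by simp
qed


lemma norm_inner_left: "norm (blinfun_inner_left (x::'a::real_inner)) = norm x"
proof (rule antisym)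
  show "norm (blinfun_inner_left x) \<le> norm x"
    by (rule norm_blinfun_bound) (auto simp: Cauchy_Schwarz_ineq2 mult.commute)
  show "norm x \<le> norm (blinfun_inner_left x)"
  proof (cases "x = 0")
    case True then show ?thesis by simp
  next
    case False
    have "norm x * norm x = blinfun_apply (blinfun_inner_left x) x" by (simp add: dot_square_norm power2_eq_square)
    also have "\<dots> \<le> norm (blinfun_inner_left x) * norm x" using norm_blinfun[of "blinfun_inner_left x" x] by simp
    finally show ?thesis using False by simp
  qed
qed

lemma inner_left_inj: "blinfun_inner_left (u::'a::real_inner) = blinfun_inner_left v \<Longrightarrow> u = v"
proof -
  assume "blinfun_inner_left u = blinfun_inner_left v"
  then have "blinfun_inner_left (u - v) = 0"
    by (simp add: linear_diff[OF bounded_linear.linear[OF bounded_linear_blinfun_inner_left]])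
  then have "norm (u - v) = 0" using norm_inner_left[of "u - v"] by simp
  then show "u = v" by simp
qed

lemma integral_combine_H:
  fixes f :: "real \<Rightarrow> 'a::{real_inner,complete_space}"
  assumes "a \<le> c" "c \<le> b" and ab: "f integrable_on {a..b}"
    and ac: "f integrable_on {a..c}" and cb: "f integrable_on {c..b}"
  shows "integral {a..b} f = integral {a..c} f + integral {c..b} f"
proof (rule inner_left_inj)
  let ?P = "blinfun_inner_left :: 'a \<Rightarrow> 'a \<Rightarrow>\<^sub>L real"
  have bl: "bounded_linear ?P" by (rule bounded_linear_blinfun_inner_left)
  have i1: "(?P \<circ> f) integrable_on {a..b}" by (rule integrable_linear[OF ab bl])
  have "integral {a..b} (?P \<circ> f) = integral {a..c} (?P \<circ> f) + integral {c..b} (?P \<circ> f)"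
    using Henstock_Kurzweil_Integration.integral_combine[OF assms(1,2) i1] by simp
  then show "?P (integral {a..b} f) = ?P (integral {a..c} f + integral {c..b} f)"
    using integral_linear[OF ab bl] integral_linear[OF ac bl] integral_linear[OF cb bl]
    by (simp add: linear_add[OF bounded_linear.linear[OF bl]])
qed

lemma integral_norm_bound_H:
  fixes f :: "real \<Rightarrow> 'a::{real_inner,complete_space}"
  assumes int_f: "f integrable_on S" and int_g: "g integrable_on S"
    and le_g: "\<And>x. x \<in> S \<Longrightarrow> norm (f x) \<le> g x"
  shows "norm (integral S f) \<le> integral S g"
proof -
  let ?P = "blinfun_inner_left :: 'a \<Rightarrow> 'a \<Rightarrow>\<^sub>L real"
  have bl: "bounded_linear ?P" by (rule bounded_linear_blinfun_inner_left)
  have "norm (integral S f) = norm (?P (integral S f))" by (simp add: norm_inner_left)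
  also have "\<dots> = norm (integral S (?P \<circ> f))" using integral_linear[OF int_f bl] by simp
  also have "\<dots> \<le> integral S g"
    by (rule integral_norm_bound_integral[OF integrable_linear[OF int_f bl] int_g])
       (simp add: norm_inner_left le_g)
  finally show ?thesis .
qed

lemma S_local_bound:
  fixes S :: "real \<Rightarrow> 'a::{real_normed_vector,complete_space} \<Rightarrow>\<^sub>L 'a"
  assumes Scont: "\<And>x. ((\<lambda>t. S t x) \<longlongrightarrow> x) (at_right 0)" and S0: "S 0 = id_blinfun"
  shows "\<exists>\<delta>>0. \<exists>B0. \<forall>u\<in>{0..\<delta>}. norm (S u) \<le> B0"
proof -
  define E where "E n = {y. \<forall>u\<in>{0..1/real (Suc n)}. norm (S u y) \<le> real n}" for n
  have "closed (E n)" for n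
  proof -
    have "E n = (\<Inter>u\<in>{0..1/real (Suc n)}. {y. norm (S u y) \<le> real n})" by (auto simp: E_def)
    moreover have "closed {y. norm (S u y) \<le> real n}" for u
      by (intro closed_Collect_le continuous_intros)
    ultimately show ?thesis by auto
  qed
  moreover have "\<exists>n. y \<in> E n" for y
  proof -
    obtain d where "d > 0" and d: "\<forall>h. 0 < h \<longrightarrow> h < d \<longrightarrow> dist (S h y) y < 1"
      using at_right0_tendstoD[OF Scont[of y], of 1] by auto
    obtain n1 where n1: "norm y + 1 \<le> real n1" using real_arch_simple by blast
    obtain n2 where n2: "inverse (real (Suc n2)) < d" using reals_Archimedean[OF \<open>d>0\<close>] by blast
    define n where "n = max n1 n2"
    have "1 / real (Suc n) \<le> 1 / real (Suc n2)" by (simp add: n_def divide_left_mono)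
    then have nd: "1 / real (Suc n) < d" using n2 by (simp add: inverse_eq_divide)
    have "norm (S u y) \<le> real n" if u: "u \<in> {0..1/real (Suc n)}" for u
    proof (cases "u = 0")
      case True
      then show ?thesis using S0 n1 by (simp add: n_def)
    next
      case False
      then have "0 < u" "u < d" using u nd by auto
      then have "dist (S u y) y < 1" using d by blast
      then have "norm (S u y) \<le> norm y + 1" using norm_triangle_ineq2[of "S u y" y]
        by (simp add: dist_norm)
      also have "\<dots> \<le> real n" using n1 by (simp add: n_def)
      finally show ?thesis .
    qed
    then have "y \<in> E n" unfolding E_def by blast
    then show ?thesis by blast
  qed
  ultimately obtain n y0 e where "e > 0" "ball y0 e \<subseteq> E n" using baire_ball by metis
  have "norm (S u) \<le> 4 * real n / e" if "u \<in> {0..1/real (Suc n)}" for u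
  proof (rule ball_bound_blinfun[OF \<open>e>0\<close>])
    fix y assume "y \<in> ball y0 e"
    then have "y \<in> E n" using \<open>ball y0 e \<subseteq> E n\<close> by blast
    then show "norm (S u y) \<le> real n" using that unfolding E_def by blast
  qed
  moreover have "1/real (Suc n) > 0" by simp
  ultimately show ?thesis by blast
qed

lemma S_bound:
  fixes S :: "real \<Rightarrow> 'a::{real_normed_vector,complete_space} \<Rightarrow>\<^sub>L 'a"
  assumes Scont: "\<And>x. ((\<lambda>t. S t x) \<longlongrightarrow> x) (at_right 0)" and S0: "S 0 = id_blinfun"
    and Sadd: "\<And>s t. 0 \<le> s \<Longrightarrow> 0 \<le> t \<Longrightarrow> S (s + t) = S s o\<^sub>L S t"
  shows "\<exists>B\<ge>1. \<forall>u\<in>{0..T}. norm (S u) \<le> B"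
proof -
  obtain \<delta> B0 where "\<delta> > 0" and B0: "\<forall>u\<in>{0..\<delta>}. norm (S u) \<le> B0"
    using S_local_bound[OF Scont S0] by blast
  define B1 where "B1 = max 1 B0"
  have B1: "B1 \<ge> 1" "B0 \<le> B1" by (auto simp: B1_def)
  have P: "\<forall>u. 0 \<le> u \<and> u \<le> real (Suc n) * \<delta> \<longrightarrow> norm (S u) \<le> B1 ^ Suc n" for n
  proof (induction n)
    case 0
    then show ?case using B0 B1 by force
  next
    case (Suc n)
    show ?case
    proof (intro allI impI)
      fix u assume u: "0 \<le> u \<and> u \<le> real (Suc (Suc n)) * \<delta>"
      show "norm (S u) \<le> B1 ^ Suc (Suc n)"
      proof (cases "u \<le> \<delta>")
        case True
        then have "norm (S u) \<le> B1" using B0 B1 u by force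
        also have "B1 \<le> B1 ^ Suc (Suc n)" using B1 by (simp add: power_increasing[of 1 "Suc (Suc n)" B1, simplified])
        finally show ?thesis .
      next
        case False
        have "S u = S \<delta> o\<^sub>L S (u - \<delta>)" using Sadd[of \<delta> "u - \<delta>"] False \<open>\<delta>>0\<close> by simp
        then have "norm (S u) \<le> norm (S \<delta>) * norm (S (u - \<delta>))" by (simp add: norm_blinfun_compose)
        also have "\<dots> \<le> B1 * B1 ^ Suc n"
        proof (rule mult_mono)
          have "norm (S \<delta>) \<le> B0" using B0 \<open>\<delta>>0\<close> by simp
          then show "norm (S \<delta>) \<le> B1" using B1 by linarith
          have "u - \<delta> \<le> real (Suc n) * \<delta>" using u by (simp add: algebra_simps)
          then show "norm (S (u - \<delta>)) \<le> B1 ^ Suc n" using Suc.IH False by auto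
          show "0 \<le> B1" using B1 by simp
        qed simp
        finally show ?thesis by simp
      qed
    qed
  qed
  obtain n where "T / \<delta> \<le> real n" using real_arch_simple by blast
  then have "T \<le> real (Suc n) * \<delta>" using \<open>\<delta>>0\<close> by (simp add: divide_le_eq algebra_simps)
  then have "\<forall>u\<in>{0..T}. norm (S u) \<le> B1 ^ Suc n" using P[of n] by auto
  moreover have "1 \<le> B1 ^ Suc n" using B1 one_le_power[of B1 "Suc n"] by blast
  ultimately show ?thesis by blast
qed

lemma R_bound:
  fixes R :: "real \<Rightarrow> 'a::{real_normed_vector,complete_space} \<Rightarrow>\<^sub>L 'a"
  assumes Rcont: "\<And>x. continuous_on {0..T} (\<lambda>t. R t x)"
  shows "\<exists>C\<ge>0. \<forall>u\<in>{0..T}. norm (R u) \<le> C"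
proof -
  have "\<exists>c. \<forall>i\<in>{0..T}. norm (R i y) \<le> c" for y
  proof -
    have "compact ((\<lambda>t. R t y) ` {0..T})" by (rule compact_continuous_image[OF Rcont compact_Icc])
    then have "bounded ((\<lambda>t. R t y) ` {0..T})" by (rule compact_imp_bounded)
    then show ?thesis unfolding bounded_iff by blast
  qed
  then obtain B where "\<forall>i\<in>{0..T}. norm (R i) \<le> B" using ubp by metis
  then show ?thesis by (intro exI[of _ "max 0 B"]) (auto intro: order_trans)
qed

lemma integral_scaleR_left_H:
  fixes f :: "real \<Rightarrow> real"
  assumes "f integrable_on S"
  shows "integral S (\<lambda>x. f x *\<^sub>R c) = integral S f *\<^sub>R c"
  by (rule integral_unique[OF has_integral_scaleR_left[OF integrable_integral[OF assms]]])

lemma integral_scaleR_right_H: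
  fixes f :: "real \<Rightarrow> 'a::real_normed_vector"
  assumes "f integrable_on S"
  shows "integral S (\<lambda>x. c *\<^sub>R f x) = c *\<^sub>R integral S f"
  using integral_linear[OF assms bounded_linear_scaleR_right[of c]] by (simp add: o_def)

lemma cont_apply_family:
  fixes L :: "real \<Rightarrow> 'a::real_normed_vector \<Rightarrow>\<^sub>L 'b::real_normed_vector"
  assumes Lc: "\<And>y. continuous_on A (\<lambda>s. L s y)" and Lb: "\<And>s. s \<in> A \<Longrightarrow> norm (L s) \<le> M"
    and u: "continuous_on A u"
  shows "continuous_on A (\<lambda>s. L s (u s))"
  unfolding continuous_on_iff
proof (intro ballI allI impI)
  fix x e assume x: "x \<in> A" and "(e::real) > 0"
  have M0: "0 \<le> M" using Lb[OF x] norm_ge_zero order_trans by blast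
  have e2: "e / 2 / (M + 1) > 0" using \<open>e>0\<close> M0 by simp
  obtain d1 where "d1 > 0" and d1: "\<forall>x'\<in>A. dist x' x < d1 \<longrightarrow> dist (u x') (u x) < e / 2 / (M + 1)"
    using u x e2 unfolding continuous_on_iff by blast
  obtain d2 where "d2 > 0" and d2: "\<forall>x'\<in>A. dist x' x < d2 \<longrightarrow> dist (L x' (u x)) (L x (u x)) < e / 2"
    using Lc[of "u x"] x \<open>e>0\<close> unfolding continuous_on_iff by (meson half_gt_zero)
  show "\<exists>d>0. \<forall>x'\<in>A. dist x' x < d \<longrightarrow> dist (L x' (u x')) (L x (u x)) < e"
  proof (intro exI[of _ "min d1 d2"] conjI ballI impI)
    show "min d1 d2 > 0" using \<open>d1>0\<close> \<open>d2>0\<close> by simp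
    fix x' assume x': "x' \<in> A" "dist x' x < min d1 d2"
    have "L x' (u x') - L x (u x) = L x' (u x' - u x) + (L x' (u x) - L x (u x))"
      by (simp add: blinfun.diff_right)
    then have "norm (L x' (u x') - L x (u x)) \<le> norm (L x' (u x' - u x)) + norm (L x' (u x) - L x (u x))"
      by (metis norm_triangle_ineq)
    also have "norm (L x' (u x' - u x)) \<le> M * norm (u x' - u x)"
      using norm_blinfun[of "L x'" "u x' - u x"] Lb[OF x'(1)] by (meson mult_right_mono norm_ge_zero order_trans)
    also have "M * norm (u x' - u x) \<le> M * (e / 2 / (M + 1))"
      using d1 x' M0 by (intro mult_left_mono) (auto simp: dist_norm less_imp_le)
    also have "M * (e / 2 / (M + 1)) \<le> e / 2"
      using M0 \<open>e>0\<close> by (simp add: field_simps)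
    finally have "norm (L x' (u x') - L x (u x)) \<le> e / 2 + norm (L x' (u x) - L x (u x))" by simp
    moreover have "norm (L x' (u x) - L x (u x)) < e / 2" using d2 x' by (auto simp: dist_norm)
    ultimately show "dist (L x' (u x')) (L x (u x)) < e" by (simp add: dist_norm)
  qed
qed

lemma frac_half_le: "0 \<le> (p::real) \<Longrightarrow> 0 \<le> e \<Longrightarrow> p * (e / (2 * (p + 1))) \<le> e / 2"
proof -
  assume a: "0 \<le> p" "0 \<le> e"
  have "p * (e / (2 * (p + 1))) = (p / (p + 1)) * (e / 2)" using a by (simp add: field_simps)
  also have "\<dots> \<le> 1 * (e / 2)" using a by (intro mult_right_mono) auto
  finally show ?thesis by simp
qed

locale sgl =
  fixes S :: "real \<Rightarrow> ('a::{real_inner,complete_space} \<Rightarrow>\<^sub>L 'a)"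
    and K :: "real \<Rightarrow> real" and R :: "real \<Rightarrow> ('a \<Rightarrow>\<^sub>L 'a)" and T B C :: real
  assumes S0: "S 0 = id_blinfun"
    and Sadd: "\<And>s t. 0 \<le> s \<Longrightarrow> 0 \<le> t \<Longrightarrow> S (s + t) = S s o\<^sub>L S t"
    and Scont: "\<And>x. ((\<lambda>t. S t x) \<longlongrightarrow> x) (at_right 0)"
    and Kint: "K integrable_on {0..T}" and Kabs: "(\<lambda>s. \<bar>K s\<bar>) integrable_on {0..T}"
    and Rcont: "\<And>x. continuous_on {0..T} (\<lambda>t. R t x)"
    and SB: "\<And>u. u \<in> {0..T} \<Longrightarrow> norm (S u) \<le> B" and B1: "1 \<le> B"
    and RC: "\<And>u. u \<in> {0..T} \<Longrightarrow> norm (R u) \<le> C" and C0: "0 \<le> C"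
begin

lemma Sapp_bound: "0 \<le> u \<Longrightarrow> u \<le> T \<Longrightarrow> norm (S u y) \<le> B * norm y"
  using norm_blinfun[of "S u" y] SB[of u] by (meson atLeastAtMost_iff mult_right_mono norm_ge_zero order_trans)

lemma Rapp_bound: "0 \<le> u \<Longrightarrow> u \<le> T \<Longrightarrow> norm (R u y) \<le> C * norm y"
  using norm_blinfun[of "R u" y] RC[of u] by (meson atLeastAtMost_iff mult_right_mono norm_ge_zero order_trans)

lemma Scomp: "0 \<le> v \<Longrightarrow> v \<le> u \<Longrightarrow> S u y = S v (S (u - v) y)"
  using Sadd[of v "u - v"] by simp

lemma Sdiff: "0 \<le> v \<Longrightarrow> v \<le> u \<Longrightarrow> u \<le> T \<Longrightarrow> norm (S u y - S v y) \<le> B * norm (S (u - v) y - y)"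
proof -
  assume a: "0 \<le> v" "v \<le> u" "u \<le> T"
  have "S u y - S v y = S v (S (u - v) y - y)" using Scomp[OF a(1,2)] by (simp add: blinfun.diff_right)
  then show ?thesis using Sapp_bound[of v "S (u - v) y - y"] a by simp
qed

lemma S_right: "e > 0 \<Longrightarrow> \<exists>d>0. \<forall>h. 0 \<le> h \<longrightarrow> h < d \<longrightarrow> norm (S h y - y) < e"
proof -
  assume "e > 0"
  obtain d where "d > 0" "\<forall>h. 0 < h \<longrightarrow> h < d \<longrightarrow> dist (S h y) y < e"
    using at_right0_tendstoD[OF Scont \<open>e>0\<close>] by blast
  then show ?thesis using \<open>e>0\<close> S0 by (intro exI[of _ d]) (auto simp: dist_norm le_less)
qed

lemma Sunif: "e > 0 \<Longrightarrow> \<exists>d>0. \<forall>u v. 0 \<le> u \<longrightarrow> u \<le> T \<longrightarrow> 0 \<le> v \<longrightarrow> v \<le> T \<longrightarrow> \<bar>u - v\<bar> < d \<longrightarrow> norm (S u y - S v y) < e"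
proof -
  assume "e > 0"
  then obtain d where "d > 0" and d: "\<forall>h. 0 \<le> h \<longrightarrow> h < d \<longrightarrow> norm (S h y - y) < e / B"
    using S_right[of "e / B" y] B1 by auto
  have *: "norm (S u y - S v y) < e" if "0 \<le> v" "v \<le> u" "u \<le> T" "u - v < d" for u v
  proof -
    have "norm (S u y - S v y) \<le> B * norm (S (u - v) y - y)" by (rule Sdiff[OF that(1-3)])
    also have "\<dots> < B * (e / B)" using d that B1 by (intro mult_strict_left_mono) auto
    also have "\<dots> = e" using B1 by simp
    finally show ?thesis .
  qed
  show ?thesis
  proof (intro exI[of _ d] conjI allI impI)
    show "d > 0" by (rule \<open>d>0\<close>)
    fix u v assume uv: "0 \<le> u" "u \<le> T" "0 \<le> v" "v \<le> T" "\<bar>u - v\<bar> < d"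
    show "norm (S u y - S v y) < e"
    proof (cases "v \<le> u")
      case True then show ?thesis using * uv by auto
    next
      case False then show ?thesis using *[of u v] uv by (simp add: norm_minus_commute)
    qed
  qed
qed

lemma Scont_on: "continuous_on {0..T} (\<lambda>u. S u y)"
  unfolding continuous_on_iff
proof (intro ballI allI impI)
  fix x e assume x: "x \<in> {0..T}" and "(e::real) > 0"
  obtain d where "d>0" and d: "\<forall>u v. 0 \<le> u \<longrightarrow> u \<le> T \<longrightarrow> 0 \<le> v \<longrightarrow> v \<le> T \<longrightarrow> \<bar>u - v\<bar> < d \<longrightarrow> norm (S u y - S v y) < e"
    using Sunif[OF \<open>e>0\<close>] by blast
  then show "\<exists>d>0. \<forall>x'\<in>{0..T}. dist x' x < d \<longrightarrow> dist (S x' y) (S x y) < e"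
    using x by (intro exI[of _ d]) (auto simp: dist_norm dist_real_def)
qed

lemma Sshift_cont: "c \<le> d \<Longrightarrow> \<tau> \<le> c \<Longrightarrow> d - \<tau> \<le> T \<Longrightarrow> continuous_on {c..d} (\<lambda>s. S (s - \<tau>) y)"
  by (rule continuous_on_compose2[OF Scont_on[of y], of _ "\<lambda>s. s - \<tau>"])
     (auto intro!: continuous_intros)

lemma Rshift_cont: "c \<le> d \<Longrightarrow> 0 \<le> t - d \<Longrightarrow> t - c \<le> T \<Longrightarrow> continuous_on {c..d} (\<lambda>s. R (t - s) y)"
  by (rule continuous_on_compose2[OF Rcont[of y], of _ "\<lambda>s. t - s"])
     (auto intro!: continuous_intros)


lemma Ksub: "0 \<le> c \<Longrightarrow> d \<le> T \<Longrightarrow> K integrable_on {c..d}"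
  by (cases "c \<le> d") (auto intro: integrable_subinterval_real[OF Kint])

lemma Kabssub: "0 \<le> c \<Longrightarrow> d \<le> T \<Longrightarrow> (\<lambda>s. \<bar>K s\<bar>) integrable_on {c..d}"
  by (cases "c \<le> d") (auto intro: integrable_subinterval_real[OF Kabs])

lemma wint_integrable:
  assumes "0 \<le> c" "d \<le> T" "d \<le> e" "e - c \<le> T"
  shows "(\<lambda>u. K u *\<^sub>R S (e - u) y) integrable_on {c..d}"
proof (rule integrable_weighted[OF Ksub[OF assms(1,2)] Kabssub[OF assms(1,2)]])
  show "continuous_on {c..d} (\<lambda>u. S (e - u) y)"
    by (rule continuous_on_compose2[OF Scont_on[of y], of _ "\<lambda>u. e - u"])
       (use assms in \<open>auto intro!: continuous_intros\<close>)
qed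

lemma wint_bound:
  assumes "0 \<le> c" "d \<le> T" "d \<le> e" "e - c \<le> T"
  shows "norm (integral {c..d} (\<lambda>u. K u *\<^sub>R S (e - u) y)) \<le> B * norm y * integral {c..d} (\<lambda>u. \<bar>K u\<bar>)"
proof -
  have "norm (integral {c..d} (\<lambda>u. K u *\<^sub>R S (e - u) y)) \<le> integral {c..d} (\<lambda>u. (B * norm y) * \<bar>K u\<bar>)"
  proof (rule integral_norm_bound_H[OF wint_integrable[OF assms]])
    show "(\<lambda>u. (B * norm y) * \<bar>K u\<bar>) integrable_on {c..d}"
      using Kabssub[OF assms(1,2)] by (rule integrable_on_mult_right)
    fix u assume "u \<in> {c..d}"
    then have "norm (S (e - u) y) \<le> B * norm y" using assms by (intro Sapp_bound) auto
    then show "norm (K u *\<^sub>R S (e - u) y) \<le> B * norm y * \<bar>K u\<bar>"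
      by (simp add: mult_left_mono mult.commute)
  qed
  also have "\<dots> = B * norm y * integral {c..d} (\<lambda>u. \<bar>K u\<bar>)"
    by (rule Henstock_Kurzweil_Integration.integral_mult_right)
  finally show ?thesis .
qed

lemma S_mu:
  assumes "0 \<le> a" "0 \<le> r" "a + r \<le> T"
  shows "S a (mu_op S K r y) = integral {0..r} (\<lambda>u. K u *\<^sub>R S (a + r - u) y)"
proof -
  have int: "(\<lambda>u. K u *\<^sub>R S (r - u) y) integrable_on {0..r}"
    by (rule wint_integrable) (use assms in auto)
  have "S a (mu_op S K r y) = integral {0..r} (blinfun_apply (S a) \<circ> (\<lambda>u. K u *\<^sub>R S (r - u) y))"
    unfolding mu_op_def by (rule integral_linear[OF int blinfun.bounded_linear_right, symmetric])
  also have "\<dots> = integral {0..r} (\<lambda>u. K u *\<^sub>R S (a + r - u) y)"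
  proof (rule Henstock_Kurzweil_Integration.integral_cong)
    fix u assume "u \<in> {0..r}"
    then have "S (a + (r - u)) y = S a (S (r - u) y)" using assms Sadd[of a "r - u"] by simp
    then show "(blinfun_apply (S a) \<circ> (\<lambda>u. K u *\<^sub>R S (r - u) y)) u = K u *\<^sub>R S (a + r - u) y"
      by (simp add: blinfun.scaleR_right algebra_simps)
  qed
  finally show ?thesis .
qed

lemma mu_step:
  assumes "0 \<le> r" "0 \<le> a" "r + a \<le> T"
  shows "mu_op S K (r + a) y - S a (mu_op S K r y) = integral {r..r+a} (\<lambda>u. K u *\<^sub>R S (r + a - u) y)"
proof -
  have "mu_op S K (r + a) y = integral {0..r} (\<lambda>u. K u *\<^sub>R S (r + a - u) y) + integral {r..r+a} (\<lambda>u. K u *\<^sub>R S (r + a - u) y)"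
    unfolding mu_op_def
    by (rule integral_combine_H) (use assms in \<open>auto intro!: wint_integrable\<close>)
  moreover have "S a (mu_op S K r y) = integral {0..r} (\<lambda>u. K u *\<^sub>R S (r + a - u) y)"
    using S_mu[of a r y] assms by (simp add: add.commute)
  ultimately show ?thesis by simp
qed

lemma S_mu_comm:
  assumes "0 \<le> h" "0 \<le> r" "h + r \<le> T"
  shows "S h (mu_op S K r y) = mu_op S K r (S h y)"
proof -
  have "S h (mu_op S K r y) = integral {0..r} (\<lambda>u. K u *\<^sub>R S (h + r - u) y)" by (rule S_mu[OF assms])
  also have "\<dots> = mu_op S K r (S h y)"
    unfolding mu_op_def
  proof (rule Henstock_Kurzweil_Integration.integral_cong)
    fix u assume "u \<in> {0..r}"
    then have "S ((r - u) + h) y = S (r - u) (S h y)" using assms Sadd[of "r - u" h] by simp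
    then show "K u *\<^sub>R S (h + r - u) y = K u *\<^sub>R S (r - u) (S h y)" by (simp add: algebra_simps)
  qed
  finally show ?thesis .
qed

lemma mu_diff:
  assumes "0 \<le> r" "r \<le> T"
  shows "mu_op S K r (y - z) = mu_op S K r y - mu_op S K r z"
proof -
  have "mu_op S K r y - mu_op S K r z = integral {0..r} (\<lambda>u. K u *\<^sub>R S (r - u) y - K u *\<^sub>R S (r - u) z)"
    unfolding mu_op_def by (rule integral_diff[symmetric]) (use assms in \<open>auto intro!: wint_integrable\<close>)
  then show ?thesis unfolding mu_op_def by (simp add: blinfun.diff_right scaleR_diff_right)
qed

lemma mu_bound:
  assumes "0 \<le> r" "r \<le> T"
  shows "norm (mu_op S K r y) \<le> B * norm y * integral {0..T} (\<lambda>u. \<bar>K u\<bar>)"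
proof -
  have "norm (mu_op S K r y) \<le> B * norm y * integral {0..r} (\<lambda>u. \<bar>K u\<bar>)"
    unfolding mu_op_def by (rule wint_bound) (use assms in auto)
  also have "integral {0..r} (\<lambda>u. \<bar>K u\<bar>) \<le> integral {0..T} (\<lambda>u. \<bar>K u\<bar>)"
    by (rule integral_subset_le) (use assms Kabs Kabssub in auto)
  then have "B * norm y * integral {0..r} (\<lambda>u. \<bar>K u\<bar>) \<le> B * norm y * integral {0..T} (\<lambda>u. \<bar>K u\<bar>)"
    using B1 by (intro mult_left_mono) auto
  finally show ?thesis .
qed

lemma IK_small:
  assumes "e > 0"
  shows "\<exists>d>0. \<forall>u v. 0 \<le> v \<longrightarrow> v \<le> u \<longrightarrow> u \<le> T \<longrightarrow> u - v < d \<longrightarrow> integral {v..u} (\<lambda>w. \<bar>K w\<bar>) < e"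
proof -
  define IK where "IK x = integral {0..x} (\<lambda>w. \<bar>K w\<bar>)" for x
  have "continuous_on {0..T} IK" unfolding IK_def by (rule indefinite_integral_continuous_1[OF Kabs])
  then have "uniformly_continuous_on {0..T} IK" by (rule compact_uniformly_continuous) simp
  then obtain d where "d > 0" and d: "\<And>x x'. x \<in> {0..T} \<Longrightarrow> x' \<in> {0..T} \<Longrightarrow> dist x' x < d \<Longrightarrow> dist (IK x') (IK x) < e"
    using assms unfolding uniformly_continuous_on_def by metis
  show ?thesis
  proof (intro exI[of _ d] conjI allI impI)
    show "d > 0" by (rule \<open>d>0\<close>)
    fix u v :: real assume uv: "0 \<le> v" "v \<le> u" "u \<le> T" "u - v < d"
    have "IK u = IK v + integral {v..u} (\<lambda>w. \<bar>K w\<bar>)"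
      unfolding IK_def
      by (rule Henstock_Kurzweil_Integration.integral_combine[symmetric]) (use uv Kabssub in auto)
    moreover have "dist (IK u) (IK v) < e" using d[of v u] uv by (auto simp: dist_real_def)
    ultimately show "integral {v..u} (\<lambda>w. \<bar>K w\<bar>) < e" by (simp add: dist_real_def)
  qed
qed


lemma W0: "0 \<le> integral {0..T} (\<lambda>u. \<bar>K u\<bar>)"
  by (rule integral_nonneg[OF Kabs]) simp

lemma mu_unif:
  assumes "e > 0"
  shows "\<exists>d>0. \<forall>u v. 0 \<le> v \<longrightarrow> v \<le> u \<longrightarrow> u \<le> T \<longrightarrow> u - v < d \<longrightarrow> norm (mu_op S K u y - mu_op S K v y) < e"
proof -
  define W where "W = integral {0..T} (\<lambda>u. \<bar>K u\<bar>)"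
  have "W \<ge> 0" using W0 by (simp add: W_def)
  have "0 \<le> B * W" using B1 \<open>W\<ge>0\<close> by simp
  then have e1: "(e/2) / (2 * (B * W + 1)) > 0" using assms by (intro divide_pos_pos) auto
  obtain d1 where "d1 > 0" and d1: "\<forall>h. 0 \<le> h \<longrightarrow> h < d1 \<longrightarrow> norm (S h y - y) < (e/2) / (2 * (B * W + 1))"
    using S_right[OF e1] by blast
  have "0 \<le> B * norm y" using B1 by simp
  then have e2: "(e/2) / (2 * (B * norm y + 1)) > 0" using assms by (intro divide_pos_pos) auto
  obtain d2 where "d2 > 0" and d2: "\<forall>u v. 0 \<le> v \<longrightarrow> v \<le> u \<longrightarrow> u \<le> T \<longrightarrow> u - v < d2 \<longrightarrow> integral {v..u} (\<lambda>w. \<bar>K w\<bar>) < (e/2) / (2 * (B * norm y + 1))"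
    using IK_small[OF e2] by blast
  show ?thesis
  proof (intro exI[of _ "min d1 d2"] conjI allI impI)
    show "min d1 d2 > 0" using \<open>d1>0\<close> \<open>d2>0\<close> by simp
    fix u v :: real assume uv: "0 \<le> v" "v \<le> u" "u \<le> T" "u - v < min d1 d2"
    have eq1: "mu_op S K u y - S (u - v) (mu_op S K v y) = integral {v..u} (\<lambda>w. K w *\<^sub>R S (u - w) y)"
      using mu_step[of v "u - v" y] uv by simp
    have eq2: "S (u - v) (mu_op S K v y) - mu_op S K v y = mu_op S K v (S (u - v) y - y)"
      using S_mu_comm[of "u - v" v y] mu_diff[of v "S (u - v) y" y] uv by simp
    have n1: "norm (integral {v..u} (\<lambda>w. K w *\<^sub>R S (u - w) y)) \<le> B * norm y * integral {v..u} (\<lambda>w. \<bar>K w\<bar>)"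
      by (rule wint_bound) (use uv in auto)
    have "integral {v..u} (\<lambda>w. \<bar>K w\<bar>) < (e/2) / (2 * (B * norm y + 1))" using d2 uv by auto
    then have "B * norm y * integral {v..u} (\<lambda>w. \<bar>K w\<bar>) \<le> B * norm y * ((e/2) / (2 * (B * norm y + 1)))"
      using B1 by (intro mult_left_mono) auto
    also have "\<dots> \<le> (e/2) / 2" using frac_half_le[of "B * norm y" "e/2"] B1 assms by simp
    finally have A: "norm (mu_op S K u y - S (u - v) (mu_op S K v y)) \<le> (e/2) / 2" using eq1 n1 by simp
    have "norm (mu_op S K v (S (u - v) y - y)) \<le> B * norm (S (u - v) y - y) * W"
      using mu_bound[of v "S (u - v) y - y"] uv by (simp add: W_def)
    also have "\<dots> \<le> B * ((e/2) / (2 * (B * W + 1))) * W"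
      using d1 uv B1 \<open>W \<ge> 0\<close> by (intro mult_right_mono mult_left_mono) (auto simp: less_imp_le)
    also have "\<dots> = (B * W) * ((e/2) / (2 * (B * W + 1)))" by simp
    also have "\<dots> \<le> (e/2) / 2" using frac_half_le[of "B * W" "e/2"] B1 \<open>W \<ge> 0\<close> assms by simp
    finally have B': "norm (S (u - v) (mu_op S K v y) - mu_op S K v y) \<le> (e/2) / 2" using eq2 by simp
    have "mu_op S K u y - mu_op S K v y = (mu_op S K u y - S (u - v) (mu_op S K v y)) + (S (u - v) (mu_op S K v y) - mu_op S K v y)"
      by simp
    then have "norm (mu_op S K u y - mu_op S K v y) \<le> norm (mu_op S K u y - S (u - v) (mu_op S K v y)) + norm (S (u - v) (mu_op S K v y) - mu_op S K v y)"
      by (metis norm_triangle_ineq)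
    then show "norm (mu_op S K u y - mu_op S K v y) < e" using A B' assms by linarith
  qed
qed

lemma mu_cont_on: "continuous_on {0..T} (\<lambda>r. mu_op S K r y)"
  unfolding continuous_on_iff
proof (intro ballI allI impI)
  fix x e assume x: "x \<in> {0..T}" and "(e::real) > 0"
  obtain d where "d>0" and d: "\<forall>u v. 0 \<le> v \<longrightarrow> v \<le> u \<longrightarrow> u \<le> T \<longrightarrow> u - v < d \<longrightarrow> norm (mu_op S K u y - mu_op S K v y) < e"
    using mu_unif[OF \<open>e>0\<close>] by blast
  show "\<exists>d>0. \<forall>x'\<in>{0..T}. dist x' x < d \<longrightarrow> dist (mu_op S K x' y) (mu_op S K x y) < e"
  proof (intro exI[of _ d] conjI ballI impI)
    show "d > 0" by (rule \<open>d>0\<close>)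
    fix x' assume x': "x' \<in> {0..T}" "dist x' x < d"
    show "dist (mu_op S K x' y) (mu_op S K x y) < e"
    proof (cases "x \<le> x'")
      case True then show ?thesis using d x x' by (auto simp: dist_norm dist_real_def)
    next
      case False
      then have "0 \<le> x'" "x' \<le> x" "x \<le> T" "x - x' < d" using x x' by (auto simp: dist_real_def)
      then have "norm (mu_op S K x y - mu_op S K x' y) < e" using d by blast
      then show ?thesis by (simp add: dist_norm norm_minus_commute)
    qed
  qed
qed


lemma R_cont_app:
  assumes "c \<le> d" "0 \<le> t - d" "t - c \<le> T" "continuous_on {c..d} u"
  shows "continuous_on {c..d} (\<lambda>s. R (t - s) (u s))"
proof (rule cont_apply_family[OF _ _ assms(4)])
  show "continuous_on {c..d} (\<lambda>s. R (t - s) y)" for y by (rule Rshift_cont) (use assms in auto)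
  show "norm (R (t - s)) \<le> C" if "s \<in> {c..d}" for s using that assms by (intro RC) auto
qed

lemma R_int_app:
  assumes "c \<le> d" "0 \<le> t - d" "t - c \<le> T" "continuous_on {c..d} u"
  shows "(\<lambda>s. R (t - s) (u s)) integrable_on {c..d}"
  by (rule integrable_continuous_H[OF R_cont_app[OF assms]])

lemma R_int_bound:
  assumes "c \<le> d" "0 \<le> t - d" "t - c \<le> T" "continuous_on {c..d} u" "\<And>s. s \<in> {c..d} \<Longrightarrow> norm (u s) \<le> M"
  shows "norm (integral {c..d} (\<lambda>s. R (t - s) (u s))) \<le> C * M * (d - c)"
proof -
  have "norm (integral {c..d} (\<lambda>s. R (t - s) (u s))) \<le> integral {c..d} (\<lambda>s. C * M)"
  proof (rule integral_norm_bound_H[OF R_int_app[OF assms(1-4)]])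
    show "(\<lambda>s. C * M) integrable_on {c..d}" using integrable_const[of "C * M" c d] by simp
    fix s assume s: "s \<in> {c..d}"
    have "norm (R (t - s) (u s)) \<le> C * norm (u s)" using s assms by (intro Rapp_bound) auto
    also have "\<dots> \<le> C * M" using assms(5)[OF s] C0 by (rule mult_left_mono)
    finally show "norm (R (t - s) (u s)) \<le> C * M" .
  qed
  also have "\<dots> = C * M * (d - c)" using assms by simp
  finally show ?thesis .
qed

lemma Sshift_cont': "c \<le> d \<Longrightarrow> 0 \<le> \<tau> \<Longrightarrow> \<tau> \<le> c \<Longrightarrow> d \<le> T \<Longrightarrow> continuous_on {c..d} (\<lambda>s. S (s - \<tau>) y)"
  by (rule Sshift_cont) auto

lemma F_int:
  assumes "0 \<le> \<tau>" "\<tau> \<le> c" "c \<le> d" "d \<le> t" "t \<le> T"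
  shows "(\<lambda>s. R (t - s) (S (s - \<tau>) y)) integrable_on {c..d}"
  by (rule R_int_app) (use assms in \<open>auto intro!: Sshift_cont'\<close>)

lemma F_diff:
  assumes "0 \<le> \<tau>" "\<tau> \<le> t" "t \<le> T"
  shows "F_op S R t \<tau> (y - z) = F_op S R t \<tau> y - F_op S R t \<tau> z"
proof -
  have fy: "(\<lambda>s. R (t - s) (S (s - \<tau>) y)) integrable_on {\<tau>..t}"
    by (rule F_int[OF assms(1) order_refl assms(2) order_refl assms(3)])
  have fz: "(\<lambda>s. R (t - s) (S (s - \<tau>) z)) integrable_on {\<tau>..t}"
    by (rule F_int[OF assms(1) order_refl assms(2) order_refl assms(3)])
  have e: "(\<lambda>s. R (t - s) (S (s - \<tau>) (y - z))) = (\<lambda>s. R (t - s) (S (s - \<tau>) y) - R (t - s) (S (s - \<tau>) z))"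
    by (simp add: blinfun.diff_right)
  have I: "integral {\<tau>..t} (\<lambda>s. R (t - s) (S (s - \<tau>) (y - z)))
      = integral {\<tau>..t} (\<lambda>s. R (t - s) (S (s - \<tau>) y)) - integral {\<tau>..t} (\<lambda>s. R (t - s) (S (s - \<tau>) z))"
    unfolding e by (rule integral_diff[OF fy fz])
  have "S (t - \<tau>) (y - z) = S (t - \<tau>) y - S (t - \<tau>) z" by (rule blinfun.diff_right)
  then show ?thesis unfolding F_op_def I by (simp add: algebra_simps)
qed

lemma F_scale:
  shows "F_op S R t \<tau> (a *\<^sub>R y) = a *\<^sub>R F_op S R t \<tau> y"
proof -
  have "integral {\<tau>..t} (\<lambda>s. R (t - s) (S (s - \<tau>) (a *\<^sub>R y))) = integral {\<tau>..t} (\<lambda>s. a *\<^sub>R R (t - s) (S (s - \<tau>) y))"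
    by (simp add: blinfun.scaleR_right)
  also have "\<dots> = a *\<^sub>R integral {\<tau>..t} (\<lambda>s. R (t - s) (S (s - \<tau>) y))"
    using integral_linear[of "\<lambda>s. R (t - s) (S (s - \<tau>) y)" "{\<tau>..t}" "\<lambda>v. a *\<^sub>R v"]
    by (cases "(\<lambda>s. R (t - s) (S (s - \<tau>) y)) integrable_on {\<tau>..t}")
       (auto simp: o_def bounded_linear_scaleR_right not_integrable_integral integrable_on_cmult_iff)
  finally show ?thesis unfolding F_op_def by (simp add: blinfun.scaleR_right scaleR_diff_right)
qed

lemma F_bound:
  assumes "0 \<le> \<tau>" "\<tau> \<le> t" "t \<le> T"
  shows "norm (F_op S R t \<tau> y) \<le> (B + T * C * B) * norm y"
proof -
  have 1: "norm (S (t - \<tau>) y) \<le> B * norm y" using assms by (intro Sapp_bound) auto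
  have "norm (integral {\<tau>..t} (\<lambda>s. R (t - s) (S (s - \<tau>) y))) \<le> C * (B * norm y) * (t - \<tau>)"
    by (rule R_int_bound) (use assms in \<open>auto intro!: Sshift_cont' Sapp_bound\<close>)
  also have "\<dots> \<le> C * (B * norm y) * T"
    using assms C0 B1 by (intro mult_left_mono) auto
  finally have 2: "norm (integral {\<tau>..t} (\<lambda>s. R (t - s) (S (s - \<tau>) y))) \<le> T * C * B * norm y"
    by (simp add: algebra_simps)
  have "norm (F_op S R t \<tau> y) \<le> norm (S (t - \<tau>) y) + norm (integral {\<tau>..t} (\<lambda>s. R (t - s) (S (s - \<tau>) y)))"
    unfolding F_op_def by (rule norm_triangle_ineq4)
  also have "\<dots> \<le> (B + T * C * B) * norm y" using 1 2 by (simp add: algebra_simps)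
  finally show ?thesis .
qed


lemma F_right_bound:
  assumes "0 \<le> \<tau>" "0 \<le> h" "\<tau> + h \<le> t" "t \<le> T"
  shows "norm (F_op S R t (\<tau> + h) y - F_op S R t \<tau> y) \<le> (B + T*C*B) * norm (S h y - y) + h * (C * (B * norm y))"
proof -
  define I1 where "I1 = integral {\<tau>..\<tau>+h} (\<lambda>s. R (t - s) (S (s - \<tau>) y))"
  define I2 where "I2 = integral {\<tau>+h..t} (\<lambda>s. R (t - s) (S (s - \<tau>) y))"
  define I3 where "I3 = integral {\<tau>+h..t} (\<lambda>s. R (t - s) (S (s - (\<tau>+h)) y))"
  have comb: "integral {\<tau>..t} (\<lambda>s. R (t - s) (S (s - \<tau>) y)) = I1 + I2"
    unfolding I1_def I2_def by (rule integral_combine_H) (use assms in \<open>auto intro!: F_int\<close>)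
  have f3: "(\<lambda>s. R (t - s) (S (s - (\<tau>+h)) y)) integrable_on {\<tau>+h..t}"
    by (rule F_int) (use assms in auto)
  have f2: "(\<lambda>s. R (t - s) (S (s - \<tau>) y)) integrable_on {\<tau>+h..t}"
    by (rule F_int) (use assms in auto)
  have e: "(\<lambda>s. R (t - s) (S (s - (\<tau>+h)) y - S (s - \<tau>) y)) = (\<lambda>s. R (t - s) (S (s - (\<tau>+h)) y) - R (t - s) (S (s - \<tau>) y))"
    by (simp add: blinfun.diff_right)
  have D: "I3 - I2 = integral {\<tau>+h..t} (\<lambda>s. R (t - s) (S (s - (\<tau>+h)) y - S (s - \<tau>) y))"
    unfolding e I2_def I3_def by (rule integral_diff[OF f3 f2, symmetric])
  have eq: "F_op S R t (\<tau> + h) y - F_op S R t \<tau> y = (S (t - (\<tau>+h)) y - S (t - \<tau>) y) - (I3 - I2) + I1"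
    unfolding F_op_def comb I3_def by (simp add: algebra_simps)
  have n1: "norm (S (t - (\<tau>+h)) y - S (t - \<tau>) y) \<le> B * norm (S h y - y)"
    using Sdiff[of "t - (\<tau>+h)" "t - \<tau>" y] assms by (simp add: norm_minus_commute)
  have "norm (I3 - I2) \<le> C * (B * norm (S h y - y)) * (t - (\<tau>+h))"
    unfolding D
  proof (rule R_int_bound)
    show "continuous_on {\<tau> + h..t} (\<lambda>s. S (s - (\<tau> + h)) y - S (s - \<tau>) y)"
      by (intro continuous_on_diff Sshift_cont') (use assms in auto)
    fix s assume "s \<in> {\<tau>+h..t}"
    then show "norm (S (s - (\<tau> + h)) y - S (s - \<tau>) y) \<le> B * norm (S h y - y)"
      using Sdiff[of "s - (\<tau>+h)" "s - \<tau>" y] assms by (simp add: norm_minus_commute)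
  qed (use assms in auto)
  also have "\<dots> \<le> C * (B * norm (S h y - y)) * T"
    using assms C0 B1 by (intro mult_left_mono) auto
  finally have n2: "norm (I3 - I2) \<le> T * C * B * norm (S h y - y)" by (simp add: algebra_simps)
  have n3: "norm I1 \<le> C * (B * norm y) * (\<tau> + h - \<tau>)"
    unfolding I1_def
    by (rule R_int_bound) (use assms in \<open>auto intro!: Sshift_cont' Sapp_bound\<close>)
  have "norm (F_op S R t (\<tau> + h) y - F_op S R t \<tau> y) \<le> norm (S (t - (\<tau>+h)) y - S (t - \<tau>) y) + norm (I3 - I2) + norm I1"
  proof -
    have "norm ((S (t - (\<tau>+h)) y - S (t - \<tau>) y) - (I3 - I2) + I1) \<le> norm ((S (t - (\<tau>+h)) y - S (t - \<tau>) y) - (I3 - I2)) + norm I1"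
      by (rule norm_triangle_ineq)
    moreover have "norm ((S (t - (\<tau>+h)) y - S (t - \<tau>) y) - (I3 - I2)) \<le> norm (S (t - (\<tau>+h)) y - S (t - \<tau>) y) + norm (I3 - I2)"
      by (rule norm_triangle_ineq4)
    ultimately show ?thesis unfolding eq by linarith
  qed
  also have "\<dots> \<le> (B + T*C*B) * norm (S h y - y) + h * (C * (B * norm y))"
    using n1 n2 n3 by (simp add: algebra_simps)
  finally show ?thesis .
qed

lemma F_right:
  assumes "0 \<le> \<tau>" "\<tau> \<le> t" "t \<le> T" "e > 0"
  shows "\<exists>d>0. \<forall>h. 0 < h \<longrightarrow> h < d \<longrightarrow> \<tau> + h \<le> t \<longrightarrow> norm (F_op S R t (\<tau>+h) y - F_op S R t \<tau> y) < e"
proof -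
  define P where "P = B + T*C*B"
  have "0 \<le> T" using assms by simp
  then have "0 \<le> T*C*B" using C0 B1 by simp
  then have P1: "P \<ge> 1" using B1 by (simp add: P_def)
  obtain d1 where "d1 > 0" and d1: "\<forall>h. 0 \<le> h \<longrightarrow> h < d1 \<longrightarrow> norm (S h y - y) < e / (2 * P)"
    using S_right[of "e / (2 * P)" y] assms P1 by auto
  define Q where "Q = C * (B * norm y)"
  have Q0: "0 \<le> Q" using C0 B1 by (simp add: Q_def)
  define d2 where "d2 = e / (2 * (Q + 1))"
  have "d2 > 0" using assms Q0 by (simp add: d2_def)
  show ?thesis
  proof (intro exI[of _ "min d1 d2"] conjI allI impI)
    show "min d1 d2 > 0" using \<open>d1>0\<close> \<open>d2>0\<close> by simp
    fix h assume h: "0 < h" "h < min d1 d2" "\<tau> + h \<le> t"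
    have A: "norm (F_op S R t (\<tau> + h) y - F_op S R t \<tau> y) \<le> P * norm (S h y - y) + h * Q"
      unfolding P_def Q_def by (rule F_right_bound) (use assms h in auto)
    have "P * norm (S h y - y) < P * (e / (2 * P))"
      using d1 h P1 by (intro mult_strict_left_mono) auto
    also have "P * (e / (2 * P)) = e / 2" using P1 by simp
    finally have B': "P * norm (S h y - y) < e / 2" .
    have "h * Q \<le> d2 * Q" using h Q0 by (intro mult_right_mono) auto
    also have "d2 * Q \<le> e / 2" unfolding d2_def using frac_half_le[OF Q0, of e] assms by (simp add: mult.commute)
    finally have C': "h * Q \<le> e / 2" .
    show "norm (F_op S R t (\<tau> + h) y - F_op S R t \<tau> y) < e" using A B' C' by linarith
  qed
qed


lemma G_as_w:
  assumes "0 \<le> \<sigma>" "\<sigma> \<le> \<tau>" "\<tau> \<le> s" "s \<le> T"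
  shows "G_op S K s \<sigma> \<tau> x = integral {\<tau>-\<sigma>..s-\<sigma>} (\<lambda>u. K u *\<^sub>R S (s - \<sigma> - u) x)"
  using mu_step[of "\<tau> - \<sigma>" "s - \<tau>" x] assms unfolding G_op_def by simp

lemma G_bound:
  assumes "0 \<le> \<sigma>" "\<sigma> \<le> \<tau>" "\<tau> \<le> s" "s \<le> T"
  shows "norm (G_op S K s \<sigma> \<tau> x) \<le> B * norm x * integral {\<tau>-\<sigma>..s-\<sigma>} (\<lambda>u. \<bar>K u\<bar>)"
  unfolding G_as_w[OF assms] by (rule wint_bound) (use assms in auto)

lemma G_cont:
  assumes "0 \<le> \<sigma>" "\<sigma> \<le> \<tau>" "\<tau> \<le> c" "c \<le> d" "d \<le> T"
  shows "continuous_on {c..d} (\<lambda>s. G_op S K s \<sigma> \<tau> x)"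
  unfolding G_op_def
proof (intro continuous_on_diff)
  show "continuous_on {c..d} (\<lambda>s. mu_op S K (s - \<sigma>) x)"
    by (rule continuous_on_compose2[OF mu_cont_on[of x], of _ "\<lambda>s. s - \<sigma>"])
       (use assms in \<open>auto intro!: continuous_intros\<close>)
  show "continuous_on {c..d} (\<lambda>s. S (s - \<tau>) (mu_op S K (\<tau> - \<sigma>) x))"
    by (rule Sshift_cont') (use assms in auto)
qed

lemma G_int:
  assumes "0 \<le> \<sigma>" "\<sigma> \<le> \<tau>" "\<tau> \<le> c" "c \<le> d" "d \<le> t" "t \<le> T"
  shows "(\<lambda>s. R (t - s) (G_op S K s \<sigma> \<tau> x)) integrable_on {c..d}"
  by (rule R_int_app) (use assms in \<open>auto intro!: G_cont\<close>)

lemma G_step: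
  assumes "0 \<le> \<sigma>" "\<sigma> \<le> \<tau>" "0 \<le> h" "\<tau> + h \<le> s" "s \<le> T"
  shows "G_op S K s \<sigma> (\<tau> + h) x - G_op S K s \<sigma> \<tau> x
       = - S (s - (\<tau> + h)) (mu_op S K (\<tau> - \<sigma> + h) x - S h (mu_op S K (\<tau> - \<sigma>) x))"
proof -
  have "S (s - \<tau>) (mu_op S K (\<tau> - \<sigma>) x) = S (s - (\<tau> + h)) (S h (mu_op S K (\<tau> - \<sigma>) x))"
    using Scomp[of "s - (\<tau> + h)" "s - \<tau>" "mu_op S K (\<tau> - \<sigma>) x"] assms by simp
  moreover have "mu_op S K (\<tau> + h - \<sigma>) x = mu_op S K (\<tau> - \<sigma> + h) x"
    by (rule arg_cong[where f="\<lambda>r. mu_op S K r x"]) simp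
  ultimately show ?thesis unfolding G_op_def by (simp add: blinfun.diff_right)
qed

lemma M_step:
  assumes "0 \<le> \<sigma>" "\<sigma> \<le> \<tau>" "0 \<le> h" "\<tau> + h \<le> t" "t \<le> T"
  shows "M_op S K R t \<sigma> (\<tau> + h) x - M_op S K R t \<sigma> \<tau> x
       = - F_op S R t (\<tau> + h) (mu_op S K (\<tau> - \<sigma> + h) x - S h (mu_op S K (\<tau> - \<sigma>) x))
         + integral {\<tau>..\<tau>+h} (\<lambda>s. R (t - s) (G_op S K s \<sigma> \<tau> x))"
proof -
  define w where "w = mu_op S K (\<tau> - \<sigma> + h) x - S h (mu_op S K (\<tau> - \<sigma>) x)"
  define J where "J = integral {\<tau>..\<tau>+h} (\<lambda>s. R (t - s) (G_op S K s \<sigma> \<tau> x))"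
  define I2 where "I2 = integral {\<tau>+h..t} (\<lambda>s. R (t - s) (G_op S K s \<sigma> \<tau> x))"
  define I3 where "I3 = integral {\<tau>+h..t} (\<lambda>s. R (t - s) (G_op S K s \<sigma> (\<tau>+h) x))"
  have comb: "integral {\<tau>..t} (\<lambda>s. R (t - s) (G_op S K s \<sigma> \<tau> x)) = J + I2"
    unfolding J_def I2_def by (rule integral_combine_H) (use assms in \<open>auto intro!: G_int\<close>)
  have f3: "(\<lambda>s. R (t - s) (G_op S K s \<sigma> (\<tau>+h) x)) integrable_on {\<tau>+h..t}"
    by (rule G_int) (use assms in auto)
  have f2: "(\<lambda>s. R (t - s) (G_op S K s \<sigma> \<tau> x)) integrable_on {\<tau>+h..t}"
    by (rule G_int) (use assms in auto)
  have "I3 - I2 = integral {\<tau>+h..t} (\<lambda>s. R (t - s) (G_op S K s \<sigma> (\<tau>+h) x) - R (t - s) (G_op S K s \<sigma> \<tau> x))"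
    unfolding I2_def I3_def by (rule integral_diff[OF f3 f2, symmetric])
  also have "\<dots> = integral {\<tau>+h..t} (\<lambda>s. - R (t - s) (S (s - (\<tau> + h)) w))"
  proof (rule Henstock_Kurzweil_Integration.integral_cong)
    fix s assume "s \<in> {\<tau>+h..t}"
    then have "G_op S K s \<sigma> (\<tau> + h) x - G_op S K s \<sigma> \<tau> x = - S (s - (\<tau> + h)) w"
      unfolding w_def by (intro G_step) (use assms in auto)
    then show "R (t - s) (G_op S K s \<sigma> (\<tau>+h) x) - R (t - s) (G_op S K s \<sigma> \<tau> x) = - R (t - s) (S (s - (\<tau> + h)) w)"
      by (metis blinfun.diff_right blinfun.minus_right)
  qed
  also have "\<dots> = - integral {\<tau>+h..t} (\<lambda>s. R (t - s) (S (s - (\<tau> + h)) w))" by simp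
  finally have D: "I3 - I2 = - integral {\<tau>+h..t} (\<lambda>s. R (t - s) (S (s - (\<tau> + h)) w))" .
  have Gt: "G_op S K t \<sigma> (\<tau> + h) x - G_op S K t \<sigma> \<tau> x = - S (t - (\<tau> + h)) w"
    unfolding w_def by (rule G_step) (use assms in auto)
  have "M_op S K R t \<sigma> (\<tau> + h) x - M_op S K R t \<sigma> \<tau> x
      = (G_op S K t \<sigma> (\<tau> + h) x - G_op S K t \<sigma> \<tau> x) - (I3 - I2) + J"
    unfolding M_op_def comb I3_def by (simp add: algebra_simps)
  also have "\<dots> = - F_op S R t (\<tau> + h) w + J"
    unfolding Gt D F_op_def by (simp add: algebra_simps)
  finally show ?thesis unfolding w_def J_def .
qed

lemma J_bound:
  assumes "0 \<le> \<sigma>" "\<sigma> \<le> \<tau>" "0 \<le> h" "\<tau> + h \<le> t" "t \<le> T"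
  shows "norm (integral {\<tau>..\<tau>+h} (\<lambda>s. R (t - s) (G_op S K s \<sigma> \<tau> x)))
      \<le> C * (B * norm x * integral {\<tau>-\<sigma>..\<tau>-\<sigma>+h} (\<lambda>u. \<bar>K u\<bar>)) * h"
proof -
  have "norm (integral {\<tau>..\<tau>+h} (\<lambda>s. R (t - s) (G_op S K s \<sigma> \<tau> x)))
      \<le> C * (B * norm x * integral {\<tau>-\<sigma>..\<tau>-\<sigma>+h} (\<lambda>u. \<bar>K u\<bar>)) * (\<tau> + h - \<tau>)"
  proof (rule R_int_bound)
    show "continuous_on {\<tau>..\<tau> + h} (\<lambda>s. G_op S K s \<sigma> \<tau> x)" by (rule G_cont) (use assms in auto)
    fix s assume s: "s \<in> {\<tau>..\<tau>+h}"
    have "norm (G_op S K s \<sigma> \<tau> x) \<le> B * norm x * integral {\<tau>-\<sigma>..s-\<sigma>} (\<lambda>u. \<bar>K u\<bar>)"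
      by (rule G_bound) (use assms s in auto)
    also have "integral {\<tau>-\<sigma>..s-\<sigma>} (\<lambda>u. \<bar>K u\<bar>) \<le> integral {\<tau>-\<sigma>..\<tau>-\<sigma>+h} (\<lambda>u. \<bar>K u\<bar>)"
      by (rule integral_subset_le) (use assms s in \<open>auto intro!: Kabssub\<close>)
    then have "B * norm x * integral {\<tau>-\<sigma>..s-\<sigma>} (\<lambda>u. \<bar>K u\<bar>) \<le> B * norm x * integral {\<tau>-\<sigma>..\<tau>-\<sigma>+h} (\<lambda>u. \<bar>K u\<bar>)"
      using B1 by (intro mult_left_mono) auto
    finally show "norm (G_op S K s \<sigma> \<tau> x) \<le> B * norm x * integral {\<tau>-\<sigma>..\<tau>-\<sigma>+h} (\<lambda>u. \<bar>K u\<bar>)" .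
  qed (use assms in auto)
  then show ?thesis by simp
qed

lemma w_approx:
  assumes "0 \<le> c" "0 \<le> h" "c + h \<le> T" and eta: "\<And>v. 0 \<le> v \<Longrightarrow> v \<le> h \<Longrightarrow> norm (S v x - x) \<le> \<eta>"
  shows "norm (integral {c..c+h} (\<lambda>u. K u *\<^sub>R S (c + h - u) x) - integral {c..c+h} K *\<^sub>R x)
         \<le> \<eta> * integral {c..c+h} (\<lambda>u. \<bar>K u\<bar>)"
proof -
  have i1: "(\<lambda>u. K u *\<^sub>R S (c + h - u) x) integrable_on {c..c+h}"
    by (rule wint_integrable) (use assms in auto)
  have Kc: "K integrable_on {c..c+h}" by (rule Ksub) (use assms in auto)
  have i2: "(\<lambda>u. K u *\<^sub>R x) integrable_on {c..c+h}" by (rule integrable_on_scaleR_left[OF Kc])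
  have "integral {c..c+h} K *\<^sub>R x = integral {c..c+h} (\<lambda>u. K u *\<^sub>R x)"
    by (rule integral_scaleR_left_H[OF Kc, symmetric])
  then have eq: "integral {c..c+h} (\<lambda>u. K u *\<^sub>R S (c + h - u) x) - integral {c..c+h} K *\<^sub>R x
      = integral {c..c+h} (\<lambda>u. K u *\<^sub>R S (c + h - u) x - K u *\<^sub>R x)"
    using integral_diff[OF i1 i2] by simp
  have "eta0": "0 \<le> \<eta>" using eta[of 0] assms S0 norm_ge_zero order_trans by blast
  have "norm (integral {c..c+h} (\<lambda>u. K u *\<^sub>R S (c + h - u) x - K u *\<^sub>R x)) \<le> integral {c..c+h} (\<lambda>u. \<eta> * \<bar>K u\<bar>)"
  proof (rule integral_norm_bound_H)
    show "(\<lambda>u. K u *\<^sub>R S (c + h - u) x - K u *\<^sub>R x) integrable_on {c..c+h}" by (rule integrable_diff[OF i1 i2])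
    show "(\<lambda>u. \<eta> * \<bar>K u\<bar>) integrable_on {c..c+h}"
      by (rule integrable_on_mult_right) (rule Kabssub, use assms in auto)
    fix u assume u: "u \<in> {c..c+h}"
    have "norm (S (c + h - u) x - x) \<le> \<eta>" using u by (intro eta) auto
    then have "\<bar>K u\<bar> * norm (S (c + h - u) x - x) \<le> \<bar>K u\<bar> * \<eta>" by (intro mult_left_mono) auto
    then show "norm (K u *\<^sub>R S (c + h - u) x - K u *\<^sub>R x) \<le> \<eta> * \<bar>K u\<bar>"
      by (simp add: scaleR_diff_right[symmetric] mult.commute)
  qed
  also have "\<dots> = \<eta> * integral {c..c+h} (\<lambda>u. \<bar>K u\<bar>)" by (rule Henstock_Kurzweil_Integration.integral_mult_right)
  finally show ?thesis unfolding eq .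
qed


lemma quot_est:
  fixes w x :: "'b::real_normed_vector"
  assumes "h > 0" "norm (w - a *\<^sub>R x) \<le> \<eta> * b"
  shows "norm ((1/h) *\<^sub>R w - k *\<^sub>R x) \<le> \<eta> * (b / h) + \<bar>a / h - k\<bar> * norm x"
proof -
  have "(1/h) *\<^sub>R w - k *\<^sub>R x = (1/h) *\<^sub>R (w - a *\<^sub>R x) + (a / h - k) *\<^sub>R x"
    using assms(1) by (simp add: algebra_simps scaleR_diff_right scaleR_left_diff_distrib)
  then have "norm ((1/h) *\<^sub>R w - k *\<^sub>R x) \<le> norm ((1/h) *\<^sub>R (w - a *\<^sub>R x)) + norm ((a / h - k) *\<^sub>R x)"
    by (metis norm_triangle_ineq)
  also have "norm ((1/h) *\<^sub>R (w - a *\<^sub>R x)) = norm (w - a *\<^sub>R x) / h" using assms(1) by simp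
  also have "\<dots> \<le> (\<eta> * b) / h" using assms by (simp add: divide_right_mono)
  finally show ?thesis by simp
qed

lemma Q_decomp:
  assumes "0 \<le> \<tau>1" "\<tau>1 \<le> t" "0 \<le> \<tau>0" "\<tau>0 \<le> t" "t \<le> T" "h \<noteq> 0"
  shows "(1/h) *\<^sub>R (- F_op S R t \<tau>1 w + J) - (- F_op S R t \<tau>0 z)
       = - F_op S R t \<tau>1 ((1/h) *\<^sub>R w - z) - (F_op S R t \<tau>1 z - F_op S R t \<tau>0 z) + (1/h) *\<^sub>R J"
proof -
  have "F_op S R t \<tau>1 ((1/h) *\<^sub>R w - z) = (1/h) *\<^sub>R F_op S R t \<tau>1 w - F_op S R t \<tau>1 z"
    using F_diff[of \<tau>1 t "(1/h) *\<^sub>R w" z] F_scale[of t \<tau>1 "1/h" w] assms by simp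
  then show ?thesis by (simp add: algebra_simps scaleR_diff_right)
qed


lemma frac_le_gen: "0 \<le> (p::real) \<Longrightarrow> 0 \<le> e \<Longrightarrow> 0 < c \<Longrightarrow> p * (e / (c * (p + 1))) \<le> e / c"
proof -
  assume a: "0 \<le> p" "0 \<le> e" "0 < c"
  have "p * (e / (c * (p + 1))) = (p / (p + 1)) * (e / c)" using a by (simp add: field_simps)
  also have "\<dots> \<le> 1 * (e / c)" using a by (intro mult_right_mono) auto
  finally show ?thesis by simp
qed

lemma right_est:
  assumes "0 \<le> \<sigma>" "\<sigma> \<le> \<tau>" "\<tau> < t" "t \<le> T"
    and LK: "\<And>e. e > 0 \<Longrightarrow> \<exists>d>0. \<forall>h. 0 < h \<longrightarrow> h < d \<longrightarrow> \<bar>integral {\<tau>-\<sigma>..\<tau>-\<sigma>+h} K / h - K (\<tau>-\<sigma>)\<bar> < e"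
    and LA: "\<And>e. e > 0 \<Longrightarrow> \<exists>d>0. \<forall>h. 0 < h \<longrightarrow> h < d \<longrightarrow> \<bar>integral {\<tau>-\<sigma>..\<tau>-\<sigma>+h} (\<lambda>u. \<bar>K u\<bar>) / h - \<bar>K (\<tau>-\<sigma>)\<bar>\<bar> < e"
    and "e > 0"
  shows "\<exists>d>0. \<forall>h. 0 < h \<longrightarrow> h < d \<longrightarrow> \<tau> + h \<le> t \<longrightarrow>
     norm ((1/h) *\<^sub>R (M_op S K R t \<sigma> (\<tau>+h) x - M_op S K R t \<sigma> \<tau> x) - (- F_op S R t \<tau> (K (\<tau>-\<sigma>) *\<^sub>R x))) < e"
proof -
  define r where "r = \<tau> - \<sigma>"
  define z where "z = K r *\<^sub>R x"
  define PF where "PF = B + T*C*B"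
  have "0 \<le> T*C*B" using assms C0 B1 by simp
  then have PF1: "PF \<ge> 1" using B1 by (simp add: PF_def)
  define kr where "kr = \<bar>K r\<bar> + 1"
  have kr1: "kr \<ge> 1" by (simp add: kr_def)
  define \<eta> where "\<eta> = e / (4 * PF * kr)"
  have "\<eta> > 0" using \<open>e>0\<close> PF1 kr1 by (simp add: \<eta>_def)
  obtain dS where "dS > 0" and dS: "\<forall>v. 0 \<le> v \<longrightarrow> v < dS \<longrightarrow> norm (S v x - x) < \<eta>"
    using S_right[OF \<open>\<eta>>0\<close>] by blast
  define \<delta>1 where "\<delta>1 = e / (4 * PF * (norm x + 1))"
  have "0 < norm x + 1" by (simp add: add_nonneg_pos)
  then have "\<delta>1 > 0" using \<open>e>0\<close> PF1 unfolding \<delta>1_def by (intro divide_pos_pos mult_pos_pos) auto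
  obtain d1 where "d1 > 0" and d1: "\<forall>h. 0 < h \<longrightarrow> h < d1 \<longrightarrow> \<bar>integral {r..r+h} K / h - K r\<bar> < \<delta>1"
    using LK[OF \<open>\<delta>1>0\<close>] unfolding r_def by blast
  obtain d2 where "d2 > 0" and d2: "\<forall>h. 0 < h \<longrightarrow> h < d2 \<longrightarrow> \<bar>integral {r..r+h} (\<lambda>u. \<bar>K u\<bar>) / h - \<bar>K r\<bar>\<bar> < 1"
    using LA[of 1] unfolding r_def by auto
  have "e/4 > 0" using \<open>e>0\<close> by simp
  obtain d3 where "d3 > 0" and d3: "\<forall>h. 0 < h \<longrightarrow> h < d3 \<longrightarrow> \<tau> + h \<le> t \<longrightarrow> norm (F_op S R t (\<tau>+h) z - F_op S R t \<tau> z) < e/4"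
    using F_right[of \<tau> t "e/4" z] assms \<open>e/4>0\<close> by auto
  define CB where "CB = C * (B * norm x)"
  have CB0: "CB \<ge> 0" using C0 B1 by (simp add: CB_def)
  define d4 where "d4 = e / (4 * (CB * kr + 1))"
  have "0 \<le> CB * kr" using CB0 kr1 by simp
  then have "d4 > 0" using \<open>e>0\<close> unfolding d4_def by (intro divide_pos_pos mult_pos_pos) auto
  show ?thesis
  proof (intro exI[of _ "min (min dS d1) (min d2 (min d3 d4))"] conjI allI impI)
    show "min (min dS d1) (min d2 (min d3 d4)) > 0"
      using \<open>dS>0\<close> \<open>d1>0\<close> \<open>d2>0\<close> \<open>d3>0\<close> \<open>d4>0\<close> by simp
    fix h assume h: "0 < h" "h < min (min dS d1) (min d2 (min d3 d4))" "\<tau> + h \<le> t"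
    define w where "w = mu_op S K (r + h) x - S h (mu_op S K r x)"
    define J where "J = integral {\<tau>..\<tau>+h} (\<lambda>s. R (t - s) (G_op S K s \<sigma> \<tau> x))"
    define a where "a = integral {r..r+h} K"
    define b where "b = integral {r..r+h} (\<lambda>u. \<bar>K u\<bar>)"
    have Mst: "M_op S K R t \<sigma> (\<tau> + h) x - M_op S K R t \<sigma> \<tau> x = - F_op S R t (\<tau> + h) w + J"
      unfolding w_def J_def r_def by (rule M_step) (use assms h in auto)
    have Qd: "(1/h) *\<^sub>R (- F_op S R t (\<tau> + h) w + J) - (- F_op S R t \<tau> z)
       = - F_op S R t (\<tau> + h) ((1/h) *\<^sub>R w - z) - (F_op S R t (\<tau> + h) z - F_op S R t \<tau> z) + (1/h) *\<^sub>R J"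
      by (rule Q_decomp) (use assms h in auto)
    have weq: "w = integral {r..r+h} (\<lambda>u. K u *\<^sub>R S (r + h - u) x)"
      unfolding w_def by (rule mu_step) (use assms h in \<open>auto simp: r_def\<close>)
    have wa: "norm (w - a *\<^sub>R x) \<le> \<eta> * b"
      unfolding weq a_def b_def
    proof (rule w_approx)
      fix v assume "0 \<le> v" "v \<le> h"
      then show "norm (S v x - x) \<le> \<eta>" using dS h by (auto intro: less_imp_le)
    qed (use assms h in \<open>auto simp: r_def\<close>)
    have qe: "norm ((1/h) *\<^sub>R w - z) \<le> \<eta> * (b / h) + \<bar>a / h - K r\<bar> * norm x"
      unfolding z_def by (rule quot_est[OF h(1) wa])
    have bh: "b / h < kr" using d2 h unfolding b_def kr_def by auto
    have ah: "\<bar>a / h - K r\<bar> < \<delta>1" using d1 h unfolding a_def by auto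
    have "\<eta> * (b / h) \<le> \<eta> * kr" using bh \<open>\<eta>>0\<close> by (intro mult_left_mono) auto
    moreover have "\<bar>a / h - K r\<bar> * norm x \<le> \<delta>1 * (norm x + 1)"
      using ah by (intro mult_mono) auto
    ultimately have uz: "norm ((1/h) *\<^sub>R w - z) \<le> \<eta> * kr + \<delta>1 * (norm x + 1)" using qe by linarith
    have T1: "norm (F_op S R t (\<tau> + h) ((1/h) *\<^sub>R w - z)) \<le> PF * (\<eta> * kr + \<delta>1 * (norm x + 1))"
    proof -
      have "norm (F_op S R t (\<tau> + h) ((1/h) *\<^sub>R w - z)) \<le> PF * norm ((1/h) *\<^sub>R w - z)"
        unfolding PF_def by (rule F_bound) (use assms h in auto)
      also have "\<dots> \<le> PF * (\<eta> * kr + \<delta>1 * (norm x + 1))" using uz PF1 by (intro mult_left_mono) auto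
      finally show ?thesis .
    qed
    have q1: "PF * (\<eta> * kr) = e / 4" using PF1 kr1 unfolding \<eta>_def by (simp add: divide_simps)
    have "0 < norm x + 1" by (simp add: add_nonneg_pos)
    then have q2: "PF * (\<delta>1 * (norm x + 1)) = e / 4" using PF1 unfolding \<delta>1_def by (simp add: divide_simps)
    have "PF * (\<eta> * kr + \<delta>1 * (norm x + 1)) = e / 2"
      using q1 q2 by (simp add: distrib_left)
    with T1 have T1': "norm (F_op S R t (\<tau> + h) ((1/h) *\<^sub>R w - z)) \<le> e / 2" by simp
    have T3: "norm (F_op S R t (\<tau> + h) z - F_op S R t \<tau> z) < e / 4" using d3 h by auto
    have Jb: "norm J \<le> C * (B * norm x * b) * h"
      unfolding J_def b_def r_def by (rule J_bound) (use assms h in auto)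
    have "norm ((1/h) *\<^sub>R J) = norm J / h" using h by simp
    also have "\<dots> \<le> C * (B * norm x * b)" using Jb h by (simp add: divide_le_eq)
    also have "\<dots> = CB * b" by (simp add: CB_def)
    also have "\<dots> \<le> CB * (h * kr)" using bh h CB0 by (intro mult_left_mono) (auto simp: divide_less_eq less_imp_le mult.commute)
    also have "\<dots> \<le> CB * (d4 * kr)" using h CB0 kr1 by (intro mult_left_mono mult_right_mono) auto
    also have "\<dots> = (CB * kr) * (e / (4 * (CB * kr + 1)))" by (simp add: d4_def)
    also have "\<dots> \<le> e / 4" using frac_le_gen[of "CB * kr" e 4] CB0 kr1 \<open>e>0\<close> by simp
    finally have T4: "norm ((1/h) *\<^sub>R J) \<le> e / 4" .
    have "norm (- F_op S R t (\<tau> + h) ((1/h) *\<^sub>R w - z) - (F_op S R t (\<tau> + h) z - F_op S R t \<tau> z) + (1/h) *\<^sub>R J)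
        \<le> norm (F_op S R t (\<tau> + h) ((1/h) *\<^sub>R w - z)) + norm (F_op S R t (\<tau> + h) z - F_op S R t \<tau> z) + norm ((1/h) *\<^sub>R J)"
    proof -
      have "norm (- F_op S R t (\<tau> + h) ((1/h) *\<^sub>R w - z) - (F_op S R t (\<tau> + h) z - F_op S R t \<tau> z) + (1/h) *\<^sub>R J)
          \<le> norm (- F_op S R t (\<tau> + h) ((1/h) *\<^sub>R w - z) - (F_op S R t (\<tau> + h) z - F_op S R t \<tau> z)) + norm ((1/h) *\<^sub>R J)"
        by (rule norm_triangle_ineq)
      moreover have "norm (- F_op S R t (\<tau> + h) ((1/h) *\<^sub>R w - z) - (F_op S R t (\<tau> + h) z - F_op S R t \<tau> z))
          \<le> norm (- F_op S R t (\<tau> + h) ((1/h) *\<^sub>R w - z)) + norm (F_op S R t (\<tau> + h) z - F_op S R t \<tau> z)"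
        by (rule norm_triangle_ineq4)
      moreover have "norm (- F_op S R t (\<tau> + h) ((1/h) *\<^sub>R w - z)) = norm (F_op S R t (\<tau> + h) ((1/h) *\<^sub>R w - z))"
        by (rule norm_minus_cancel)
      ultimately show ?thesis by linarith
    qed
    then have "norm ((1/h) *\<^sub>R (- F_op S R t (\<tau> + h) w + J) - (- F_op S R t \<tau> z)) < e"
      unfolding Qd using T1' T3 T4 by linarith
    then show "norm ((1/h) *\<^sub>R (M_op S K R t \<sigma> (\<tau>+h) x - M_op S K R t \<sigma> \<tau> x) - (- F_op S R t \<tau> (K (\<tau>-\<sigma>) *\<^sub>R x))) < e"
      unfolding Mst z_def r_def .
  qed
qed


lemma left_est:
  assumes "0 \<le> \<sigma>" "\<sigma> < \<tau>" "\<tau> \<le> t" "t \<le> T"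
    and LK: "\<And>e. e > 0 \<Longrightarrow> \<exists>d>0. \<forall>h. 0 < h \<longrightarrow> h < d \<longrightarrow> \<bar>integral {\<tau>-\<sigma>-h..\<tau>-\<sigma>} K / h - K (\<tau>-\<sigma>)\<bar> < e"
    and LA: "\<And>e. e > 0 \<Longrightarrow> \<exists>d>0. \<forall>h. 0 < h \<longrightarrow> h < d \<longrightarrow> \<bar>integral {\<tau>-\<sigma>-h..\<tau>-\<sigma>} (\<lambda>u. \<bar>K u\<bar>) / h - \<bar>K (\<tau>-\<sigma>)\<bar>\<bar> < e"
    and "e > 0"
  shows "\<exists>d>0. \<forall>h. 0 < h \<longrightarrow> h < d \<longrightarrow> \<sigma> \<le> \<tau> - h \<longrightarrow>
     norm ((1/h) *\<^sub>R (M_op S K R t \<sigma> \<tau> x - M_op S K R t \<sigma> (\<tau> - h) x) - (- F_op S R t \<tau> (K (\<tau>-\<sigma>) *\<^sub>R x))) < e"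
proof -
  define r where "r = \<tau> - \<sigma>"
  define z where "z = K r *\<^sub>R x"
  define PF where "PF = B + T*C*B"
  have "0 \<le> T*C*B" using assms C0 B1 by simp
  then have PF1: "PF \<ge> 1" using B1 by (simp add: PF_def)
  define kr where "kr = \<bar>K r\<bar> + 1"
  have kr1: "kr \<ge> 1" by (simp add: kr_def)
  define \<eta> where "\<eta> = e / (4 * PF * kr)"
  have "\<eta> > 0" using \<open>e>0\<close> PF1 kr1 by (simp add: \<eta>_def)
  obtain dS where "dS > 0" and dS: "\<forall>v. 0 \<le> v \<longrightarrow> v < dS \<longrightarrow> norm (S v x - x) < \<eta>"
    using S_right[OF \<open>\<eta>>0\<close>] by blast
  define \<delta>1 where "\<delta>1 = e / (4 * PF * (norm x + 1))"
  have "0 < norm x + 1" by (simp add: add_nonneg_pos)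
  then have "\<delta>1 > 0" using \<open>e>0\<close> PF1 unfolding \<delta>1_def by (intro divide_pos_pos mult_pos_pos) auto
  obtain d1 where "d1 > 0" and d1: "\<forall>h. 0 < h \<longrightarrow> h < d1 \<longrightarrow> \<bar>integral {r-h..r} K / h - K r\<bar> < \<delta>1"
    using LK[OF \<open>\<delta>1>0\<close>] unfolding r_def by blast
  obtain d2 where "d2 > 0" and d2: "\<forall>h. 0 < h \<longrightarrow> h < d2 \<longrightarrow> \<bar>integral {r-h..r} (\<lambda>u. \<bar>K u\<bar>) / h - \<bar>K r\<bar>\<bar> < 1"
    using LA[of 1] unfolding r_def by auto
  define CB where "CB = C * (B * norm x)"
  have CB0: "CB \<ge> 0" using C0 B1 by (simp add: CB_def)
  define d4 where "d4 = e / (4 * (CB * kr + 1))"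
  have "0 \<le> CB * kr" using CB0 kr1 by simp
  then have "d4 > 0" using \<open>e>0\<close> unfolding d4_def by (intro divide_pos_pos mult_pos_pos) auto
  show ?thesis
  proof (intro exI[of _ "min (min dS d1) (min d2 d4)"] conjI allI impI)
    show "min (min dS d1) (min d2 d4) > 0"
      using \<open>dS>0\<close> \<open>d1>0\<close> \<open>d2>0\<close> \<open>d4>0\<close> by simp
    fix h assume h: "0 < h" "h < min (min dS d1) (min d2 d4)" "\<sigma> \<le> \<tau> - h"
    define w where "w = mu_op S K r x - S h (mu_op S K (r - h) x)"
    define J where "J = integral {\<tau>-h..\<tau>} (\<lambda>s. R (t - s) (G_op S K s \<sigma> (\<tau>-h) x))"
    define a where "a = integral {r-h..r} K"
    define b where "b = integral {r-h..r} (\<lambda>u. \<bar>K u\<bar>)"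
    have e1: "\<tau> - h + h = \<tau>" by simp
    have e2: "\<tau> - h - \<sigma> + h = r" by (simp add: r_def)
    have e3: "\<tau> - h - \<sigma> = r - h" by (simp add: r_def)
    have e4: "r - h + h = r" by simp
    have Mst: "M_op S K R t \<sigma> \<tau> x - M_op S K R t \<sigma> (\<tau> - h) x = - F_op S R t \<tau> w + J"
      using M_step[of \<sigma> "\<tau> - h" h t x] assms h unfolding e1 e2 e3 w_def J_def by simp
    have Qd: "(1/h) *\<^sub>R (- F_op S R t \<tau> w + J) - (- F_op S R t \<tau> z)
       = - F_op S R t \<tau> ((1/h) *\<^sub>R w - z) - (F_op S R t \<tau> z - F_op S R t \<tau> z) + (1/h) *\<^sub>R J"
      by (rule Q_decomp) (use assms h in auto)
    have weq: "w = integral {r-h..r} (\<lambda>u. K u *\<^sub>R S (r - h + h - u) x)"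
      using mu_step[of "r - h" h x] assms h unfolding e4 w_def by (simp add: r_def)
    have wa: "norm (w - a *\<^sub>R x) \<le> \<eta> * b"
    proof -
      have "norm (integral {r-h..r-h+h} (\<lambda>u. K u *\<^sub>R S (r - h + h - u) x) - integral {r-h..r-h+h} K *\<^sub>R x)
          \<le> \<eta> * integral {r-h..r-h+h} (\<lambda>u. \<bar>K u\<bar>)"
      proof (rule w_approx)
        fix v assume "0 \<le> v" "v \<le> h"
        then show "norm (S v x - x) \<le> \<eta>" using dS h by (auto intro: less_imp_le)
      qed (use assms h in \<open>auto simp: r_def\<close>)
      then show ?thesis unfolding e4 weq a_def b_def .
    qed
    have qe: "norm ((1/h) *\<^sub>R w - z) \<le> \<eta> * (b / h) + \<bar>a / h - K r\<bar> * norm x"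
      unfolding z_def by (rule quot_est[OF h(1) wa])
    have bh: "b / h < kr" using d2 h unfolding b_def kr_def by auto
    have ah: "\<bar>a / h - K r\<bar> < \<delta>1" using d1 h unfolding a_def by auto
    have "\<eta> * (b / h) \<le> \<eta> * kr" using bh \<open>\<eta>>0\<close> by (intro mult_left_mono) auto
    moreover have "\<bar>a / h - K r\<bar> * norm x \<le> \<delta>1 * (norm x + 1)"
      using ah by (intro mult_mono) auto
    ultimately have uz: "norm ((1/h) *\<^sub>R w - z) \<le> \<eta> * kr + \<delta>1 * (norm x + 1)" using qe by linarith
    have T1: "norm (F_op S R t \<tau> ((1/h) *\<^sub>R w - z)) \<le> PF * (\<eta> * kr + \<delta>1 * (norm x + 1))"
    proof -
      have "norm (F_op S R t \<tau> ((1/h) *\<^sub>R w - z)) \<le> PF * norm ((1/h) *\<^sub>R w - z)"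
        unfolding PF_def by (rule F_bound) (use assms h in auto)
      also have "\<dots> \<le> PF * (\<eta> * kr + \<delta>1 * (norm x + 1))" using uz PF1 by (intro mult_left_mono) auto
      finally show ?thesis .
    qed
    have q1: "PF * (\<eta> * kr) = e / 4" using PF1 kr1 unfolding \<eta>_def by (simp add: divide_simps)
    have q2: "PF * (\<delta>1 * (norm x + 1)) = e / 4" using PF1 \<open>0 < norm x + 1\<close> unfolding \<delta>1_def by (simp add: divide_simps)
    have "PF * (\<eta> * kr + \<delta>1 * (norm x + 1)) = e / 2"
      using q1 q2 by (simp add: distrib_left)
    with T1 have T1': "norm (F_op S R t \<tau> ((1/h) *\<^sub>R w - z)) \<le> e / 2" by simp
    have Jb0: "norm (integral {\<tau>-h..\<tau>-h+h} (\<lambda>s. R (t - s) (G_op S K s \<sigma> (\<tau>-h) x)))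
        \<le> C * (B * norm x * integral {\<tau>-h-\<sigma>..\<tau>-h-\<sigma>+h} (\<lambda>u. \<bar>K u\<bar>)) * h"
      by (rule J_bound) (use assms h in auto)
    have Jb: "norm J \<le> C * (B * norm x * b) * h"
      using Jb0 unfolding e1 e3 e4 J_def b_def .
    have "norm ((1/h) *\<^sub>R J) = norm J / h" using h by simp
    also have "\<dots> \<le> C * (B * norm x * b)" using Jb h by (simp add: divide_le_eq)
    also have "\<dots> = CB * b" by (simp add: CB_def)
    also have "\<dots> \<le> CB * (h * kr)" using bh h CB0 by (intro mult_left_mono) (auto simp: divide_less_eq less_imp_le mult.commute)
    also have "\<dots> \<le> CB * (d4 * kr)" using h CB0 kr1 by (intro mult_left_mono mult_right_mono) auto
    also have "\<dots> = (CB * kr) * (e / (4 * (CB * kr + 1)))" by (simp add: d4_def)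
    also have "\<dots> \<le> e / 4" using frac_le_gen[of "CB * kr" e 4] CB0 kr1 \<open>e>0\<close> by simp
    finally have T4: "norm ((1/h) *\<^sub>R J) \<le> e / 4" .
    have "norm (- F_op S R t \<tau> ((1/h) *\<^sub>R w - z) - (F_op S R t \<tau> z - F_op S R t \<tau> z) + (1/h) *\<^sub>R J)
        \<le> norm (F_op S R t \<tau> ((1/h) *\<^sub>R w - z)) + norm ((1/h) *\<^sub>R J)"
    proof -
      have "norm (- F_op S R t \<tau> ((1/h) *\<^sub>R w - z) + (1/h) *\<^sub>R J)
          \<le> norm (- F_op S R t \<tau> ((1/h) *\<^sub>R w - z)) + norm ((1/h) *\<^sub>R J)"
        by (rule norm_triangle_ineq)
      then show ?thesis by simp
    qed
    then have "norm ((1/h) *\<^sub>R (- F_op S R t \<tau> w + J) - (- F_op S R t \<tau> z)) < e"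
      unfolding Qd using T1' T4 \<open>e>0\<close> by linarith
    then show "norm ((1/h) *\<^sub>R (M_op S K R t \<sigma> \<tau> x - M_op S K R t \<sigma> (\<tau> - h) x) - (- F_op S R t \<tau> (K (\<tau>-\<sigma>) *\<^sub>R x))) < e"
      unfolding Mst z_def r_def .
  qed
qed


lemma deriv_at:
  assumes "0 \<le> \<sigma>" "\<sigma> < \<tau>" "\<tau> < t" "t \<le> T"
    and LK: "\<And>e. e > 0 \<Longrightarrow> \<exists>d>0. \<forall>h. 0 < h \<longrightarrow> h < d \<longrightarrow> \<bar>integral {\<tau>-\<sigma>..\<tau>-\<sigma>+h} K / h - K (\<tau>-\<sigma>)\<bar> < e"
    and LA: "\<And>e. e > 0 \<Longrightarrow> \<exists>d>0. \<forall>h. 0 < h \<longrightarrow> h < d \<longrightarrow> \<bar>integral {\<tau>-\<sigma>..\<tau>-\<sigma>+h} (\<lambda>u. \<bar>K u\<bar>) / h - \<bar>K (\<tau>-\<sigma>)\<bar>\<bar> < e"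
    and LK': "\<And>e. e > 0 \<Longrightarrow> \<exists>d>0. \<forall>h. 0 < h \<longrightarrow> h < d \<longrightarrow> \<bar>integral {\<tau>-\<sigma>-h..\<tau>-\<sigma>} K / h - K (\<tau>-\<sigma>)\<bar> < e"
    and LA': "\<And>e. e > 0 \<Longrightarrow> \<exists>d>0. \<forall>h. 0 < h \<longrightarrow> h < d \<longrightarrow> \<bar>integral {\<tau>-\<sigma>-h..\<tau>-\<sigma>} (\<lambda>u. \<bar>K u\<bar>) / h - \<bar>K (\<tau>-\<sigma>)\<bar>\<bar> < e"
  shows "((\<lambda>\<tau>'. M_op S K R t \<sigma> \<tau>' x) has_vector_derivative (- F_op S R t \<tau> (K (\<tau> - \<sigma>) *\<^sub>R x)))
           (at \<tau> within {\<sigma>..t})"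
proof -
  define D where "D = - F_op S R t \<tau> (K (\<tau> - \<sigma>) *\<^sub>R x)"
  define f where "f = (\<lambda>\<tau>'. M_op S K R t \<sigma> \<tau>' x)"
  have "\<tau> \<in> interior {\<sigma>..t}" using assms by simp
  then have at: "at \<tau> within {\<sigma>..t} = at \<tau>" by (rule at_within_interior)
  let ?g = "\<lambda>y. (1 / norm (y - \<tau>)) *\<^sub>R (f y - (f \<tau> + (y - \<tau>) *\<^sub>R D))"
  have right: "(?g \<longlongrightarrow> 0) (at_right \<tau>)"
  proof (rule tendstoI)
    fix e :: real assume "e > 0"
    obtain d where "d > 0" and d: "\<forall>h. 0 < h \<longrightarrow> h < d \<longrightarrow> \<tau> + h \<le> t \<longrightarrow>
        norm ((1/h) *\<^sub>R (f (\<tau>+h) - f \<tau>) - D) < e"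
      using right_est[OF assms(1) less_imp_le[OF assms(2)] assms(3,4) LK LA \<open>e>0\<close>] unfolding f_def D_def by blast
    show "\<forall>\<^sub>F y in at_right \<tau>. dist (?g y) 0 < e"
      unfolding eventually_at_right_field
    proof (intro exI[of _ "\<tau> + min d (t - \<tau>)"] conjI allI impI)
      show "\<tau> < \<tau> + min d (t - \<tau>)" using \<open>d>0\<close> assms by simp
      fix y assume y: "\<tau> < y" "y < \<tau> + min d (t - \<tau>)"
      define h where "h = y - \<tau>"
      have h: "0 < h" "h < d" "\<tau> + h \<le> t" using y by (auto simp: h_def)
      have yh: "y = \<tau> + h" by (simp add: h_def)
      have "?g y = (1/h) *\<^sub>R (f (\<tau>+h) - f \<tau>) - D"
        using h(1) unfolding yh by (simp add: algebra_simps scaleR_diff_right)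
      then show "dist (?g y) 0 < e" using d h by simp
    qed
  qed
  have left: "(?g \<longlongrightarrow> 0) (at_left \<tau>)"
  proof (rule tendstoI)
    fix e :: real assume "e > 0"
    obtain d where "d > 0" and d: "\<forall>h. 0 < h \<longrightarrow> h < d \<longrightarrow> \<sigma> \<le> \<tau> - h \<longrightarrow>
        norm ((1/h) *\<^sub>R (f \<tau> - f (\<tau> - h)) - D) < e"
      using left_est[OF assms(1,2) less_imp_le[OF assms(3)] assms(4) LK' LA' \<open>e>0\<close>] unfolding f_def D_def by blast
    show "\<forall>\<^sub>F y in at_left \<tau>. dist (?g y) 0 < e"
      unfolding eventually_at_left_field
    proof (intro exI[of _ "\<tau> - min d (\<tau> - \<sigma>)"] conjI allI impI)
      show "\<tau> - min d (\<tau> - \<sigma>) < \<tau>" using \<open>d>0\<close> assms by simp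
      fix y assume y: "\<tau> - min d (\<tau> - \<sigma>) < y" "y < \<tau>"
      define h where "h = \<tau> - y"
      have h: "0 < h" "h < d" "\<sigma> \<le> \<tau> - h" using y by (auto simp: h_def)
      have yh: "y = \<tau> - h" by (simp add: h_def)
      have "?g y = - ((1/h) *\<^sub>R (f \<tau> - f (\<tau> - h)) - D)"
        using h(1) unfolding yh by (simp add: algebra_simps scaleR_diff_right)
      then have "norm (?g y) = norm ((1/h) *\<^sub>R (f \<tau> - f (\<tau> - h)) - D)" by (simp only: norm_minus_cancel)
      then show "dist (?g y) 0 < e" using d h by simp
    qed
  qed
  have "(?g \<longlongrightarrow> 0) (at \<tau>)" using left right by (simp add: filterlim_at_split)
  then have "(f has_derivative (\<lambda>h. h *\<^sub>R D)) (at \<tau>)"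
    unfolding has_derivative_within by (simp add: bounded_linear_scaleR_left)
  then show ?thesis unfolding has_vector_derivative_def at f_def D_def .
qed

end

lemma abs_le_sq1: "\<bar>k::real\<bar> \<le> k\<^sup>2 + 1"
proof -
  have "0 \<le> (\<bar>k\<bar> - 1)\<^sup>2" by simp
  also have "(\<bar>k\<bar> - 1)\<^sup>2 = k\<^sup>2 - 2 * \<bar>k\<bar> + 1" by (simp add: power2_diff power2_abs)
  finally have "2 * \<bar>k\<bar> \<le> k\<^sup>2 + 1" by simp
  moreover have "0 \<le> k\<^sup>2" by simp
  ultimately show ?thesis by linarith
qed

theorem propositionA6:
  fixes S :: "real \<Rightarrow> ('a::{real_inner, complete_space} \<Rightarrow>\<^sub>L 'a)"
    and K :: "real \<Rightarrow> real"
    and R :: "real \<Rightarrow> ('a \<Rightarrow>\<^sub>L 'a)"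
    and T t \<sigma> :: real
    and x :: 'a
  assumes "C0_semigroup S"
    and "T > 0"
    and "K measurable_on {0..T}"
    and "(\<lambda>s. (K s)\<^sup>2) integrable_on {0..T}"
    and "strongly_continuous_on {0..T} R"
    and "resolvent_eq S K T R"
    and "\<And>R'. strongly_continuous_on {0..T} R' \<Longrightarrow> resolvent_eq S K T R'
            \<Longrightarrow> \<forall>s\<in>{0..T}. R' s = R s"
    and "0 \<le> \<sigma>" and "\<sigma> \<le> t" and "t \<le> T"
    and "x \<in> generator_domain S"
  shows "AE \<tau> in lborel. \<tau> \<in> {\<sigma>..t} \<longrightarrow>
           ((\<lambda>\<tau>'. M_op S K R t \<sigma> \<tau>' x)
              has_vector_derivative (- F_op S R t \<tau> (K (\<tau> - \<sigma>) *\<^sub>R x)))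
             (at \<tau> within {\<sigma>..t})"
proof -
  have S0: "S 0 = id_blinfun" and Sadd: "\<And>s t. 0 \<le> s \<Longrightarrow> 0 \<le> t \<Longrightarrow> S (s + t) = S s o\<^sub>L S t"
    and Scont: "\<And>x. ((\<lambda>t. S t x) \<longlongrightarrow> x) (at_right 0)"
    using assms(1) unfolding C0_semigroup_def by auto
  have "K absolutely_integrable_on {0..T}"
  proof (rule measurable_bounded_by_integrable_imp_absolutely_integrable)
    show "{0..T} \<in> sets lebesgue" by simp
    then show "K \<in> borel_measurable (lebesgue_on {0..T})"
      using assms(3) measurable_on_iff_borel_measurable by blast
    show "(\<lambda>s. (K s)\<^sup>2 + 1) integrable_on {0..T}"
      using integrable_add[OF assms(4) integrable_const_ivl[of "1::real" 0 T]] by simp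
    show "norm (K s) \<le> (K s)\<^sup>2 + 1" for s using abs_le_sq1[of "K s"] by simp
  qed
  then have Kint: "K integrable_on {0..T}" and Kabs: "(\<lambda>s. \<bar>K s\<bar>) integrable_on {0..T}"
    unfolding absolutely_integrable_on_def by (auto simp: real_norm_def)
  have Rcont: "\<And>x. continuous_on {0..T} (\<lambda>t. R t x)"
    using assms(5) unfolding strongly_continuous_on_def by blast
  obtain B where B1: "B \<ge> 1" and SB: "\<forall>u\<in>{0..T}. norm (S u) \<le> B"
    using S_bound[OF Scont S0 Sadd, of T] by blast
  obtain C where C0: "C \<ge> 0" and RC: "\<forall>u\<in>{0..T}. norm (R u) \<le> C"
    using R_bound[OF Rcont] by blast
  interpret sgl S K R T B C
    by (unfold_locales) (use S0 Sadd Scont Kint Kabs Rcont B1 SB C0 RC in auto)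
  obtain N1 where N1: "negligible N1" "\<forall>r. 0 < r \<longrightarrow> r < T \<longrightarrow> r \<notin> N1 \<longrightarrow>
     (\<forall>e>0. \<exists>d>0. \<forall>h. 0 < h \<longrightarrow> h < d \<longrightarrow>
        \<bar>integral {r..r+h} K / h - K r\<bar> < e \<and> \<bar>integral {r-h..r} K / h - K r\<bar> < e)"
    using LD[OF Kint] by blast
  obtain N2 where N2: "negligible N2" "\<forall>r. 0 < r \<longrightarrow> r < T \<longrightarrow> r \<notin> N2 \<longrightarrow>
     (\<forall>e>0. \<exists>d>0. \<forall>h. 0 < h \<longrightarrow> h < d \<longrightarrow>
        \<bar>integral {r..r+h} (\<lambda>u. \<bar>K u\<bar>) / h - \<bar>K r\<bar>\<bar> < e \<and> \<bar>integral {r-h..r} (\<lambda>u. \<bar>K u\<bar>) / h - \<bar>K r\<bar>\<bar> < e)"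
    using LD[OF Kabs] by blast
  define N where "N = {\<sigma>, t} \<union> ((+) \<sigma> ` (N1 \<union> N2))"
  have negN: "negligible N"
    unfolding N_def using N1(1) N2(1) by (intro negligible_Un negligible_translation) auto
  have "AE \<tau> in lebesgue. \<tau> \<in> {\<sigma>..t} \<longrightarrow>
           ((\<lambda>\<tau>'. M_op S K R t \<sigma> \<tau>' x)
              has_vector_derivative (- F_op S R t \<tau> (K (\<tau> - \<sigma>) *\<^sub>R x)))
             (at \<tau> within {\<sigma>..t})"
    unfolding eventually_ae_filter_negligible
  proof (intro exI conjI)
    show "negligible N" by (rule negN)
    show "{\<tau>. \<not> (\<tau> \<in> {\<sigma>..t} \<longrightarrow> ((\<lambda>\<tau>'. M_op S K R t \<sigma> \<tau>' x)
              has_vector_derivative (- F_op S R t \<tau> (K (\<tau> - \<sigma>) *\<^sub>R x))) (at \<tau> within {\<sigma>..t}))} \<subseteq> N"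
    proof (rule subsetI, rule ccontr)
      fix \<tau> assume "\<tau> \<in> {\<tau>. \<not> (\<tau> \<in> {\<sigma>..t} \<longrightarrow> ((\<lambda>\<tau>'. M_op S K R t \<sigma> \<tau>' x)
              has_vector_derivative (- F_op S R t \<tau> (K (\<tau> - \<sigma>) *\<^sub>R x))) (at \<tau> within {\<sigma>..t}))}"
        and "\<tau> \<notin> N"
      then have \<tau>: "\<tau> \<in> {\<sigma>..t}" and nd: "\<not> ((\<lambda>\<tau>'. M_op S K R t \<sigma> \<tau>' x)
              has_vector_derivative (- F_op S R t \<tau> (K (\<tau> - \<sigma>) *\<^sub>R x))) (at \<tau> within {\<sigma>..t})"
        and nN: "\<tau> \<notin> N" by auto
      have st: "\<sigma> < \<tau>" "\<tau> < t" using \<tau> nN by (auto simp: N_def)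
      define r where "r = \<tau> - \<sigma>"
      have r: "0 < r" "r < T" using st assms(8-10) by (auto simp: r_def)
      have "r \<notin> N1 \<union> N2"
      proof
        assume "r \<in> N1 \<union> N2"
        then have "\<tau> \<in> (+) \<sigma> ` (N1 \<union> N2)" by (force simp: r_def)
        then show False using nN by (simp add: N_def)
      qed
      then have L1: "\<forall>e>0. \<exists>d>0. \<forall>h. 0 < h \<longrightarrow> h < d \<longrightarrow>
          \<bar>integral {r..r+h} K / h - K r\<bar> < e \<and> \<bar>integral {r-h..r} K / h - K r\<bar> < e"
        and L2: "\<forall>e>0. \<exists>d>0. \<forall>h. 0 < h \<longrightarrow> h < d \<longrightarrow>
          \<bar>integral {r..r+h} (\<lambda>u. \<bar>K u\<bar>) / h - \<bar>K r\<bar>\<bar> < e \<and> \<bar>integral {r-h..r} (\<lambda>u. \<bar>K u\<bar>) / h - \<bar>K r\<bar>\<bar> < e"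
        using N1(2) N2(2) r by auto
      have "((\<lambda>\<tau>'. M_op S K R t \<sigma> \<tau>' x) has_vector_derivative (- F_op S R t \<tau> (K (\<tau> - \<sigma>) *\<^sub>R x)))
           (at \<tau> within {\<sigma>..t})"
      proof (rule deriv_at)
        show "0 \<le> \<sigma>" "\<sigma> < \<tau>" "\<tau> < t" "t \<le> T" using st assms(8,10) by auto
        show "\<exists>d>0. \<forall>h. 0 < h \<longrightarrow> h < d \<longrightarrow> \<bar>integral {\<tau>-\<sigma>..\<tau>-\<sigma>+h} K / h - K (\<tau>-\<sigma>)\<bar> < e" if "e > 0" for e
          using L1 that unfolding r_def by meson
        show "\<exists>d>0. \<forall>h. 0 < h \<longrightarrow> h < d \<longrightarrow> \<bar>integral {\<tau>-\<sigma>..\<tau>-\<sigma>+h} (\<lambda>u. \<bar>K u\<bar>) / h - \<bar>K (\<tau>-\<sigma>)\<bar>\<bar> < e" if "e > 0" for e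
          using L2 that unfolding r_def by meson
        show "\<exists>d>0. \<forall>h. 0 < h \<longrightarrow> h < d \<longrightarrow> \<bar>integral {\<tau>-\<sigma>-h..\<tau>-\<sigma>} K / h - K (\<tau>-\<sigma>)\<bar> < e" if "e > 0" for e
          using L1 that unfolding r_def by meson
        show "\<exists>d>0. \<forall>h. 0 < h \<longrightarrow> h < d \<longrightarrow> \<bar>integral {\<tau>-\<sigma>-h..\<tau>-\<sigma>} (\<lambda>u. \<bar>K u\<bar>) / h - \<bar>K (\<tau>-\<sigma>)\<bar>\<bar> < e" if "e > 0" for e
          using L2 that unfolding r_def by meson
      qed
      with nd show False by blast
    qed
  qed
  then show ?thesis by (simp add: AE_completion_iff)
qed

end
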